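(* Let $M,M',M_0,M'_0$ be non-negative definite Hermitian matrices of the same size, let $\lambda_j$ be the $j$th largest eigenvalue of $\bar M'^{1/2}M\bar M'^{1/2}$ and $\lambda_{0j}$ the $j$th largest eigenvalue of $\bar M_0'^{1/2}M_0\bar M_0'^{1/2}$, and set $\delta=M-M_0$, $\delta'=M'-M'_0$. Then for all $j$, $$|\lambda_j-\lambda_{0j}|\le\min\Big\{\|\bar M'_0\delta\|+\|\bar M_0^{1/2}\delta'\bar M_0^{1/2}\|,\ \|\bar M_0\delta'\|+\|\bar M_0'^{1/2}\delta\bar M_0'^{1/2}\|\Big\}+\|\bar\delta'\delta\|.$$
   Context: A bar denotes entrywise complex conjugation, $X^{1/2}$ the positive semidefinite square root, and $\|\cdot\|$ the operator norm. *)

theory Defs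
  imports "Jordan_Normal_Form.Schur_Decomposition" "HOL-Computational_Algebra.Polynomial"
begin

definition mconj :: "complex mat \<Rightarrow> complex mat" where
  "mconj A = map_mat cnj A"

definition hermitian_mat :: "nat \<Rightarrow> complex mat \<Rightarrow> bool" where
  "hermitian_mat n A \<longleftrightarrow> A \<in> carrier_mat n n \<and> mat_adjoint A = A"

definition psd_mat :: "nat \<Rightarrow> complex mat \<Rightarrow> bool" where
  "psd_mat n A \<longleftrightarrow> hermitian_mat n A \<and>
     (\<forall>v \<in> carrier_vec n. 0 \<le> Re ((A *\<^sub>v v) \<bullet>c v))"

definition msqrt :: "complex mat \<Rightarrow> complex mat" where
  "msqrt A = (THE S. psd_mat (dim_row A) S \<and> S * S = A)"

text \<open>Eigenvalues (with algebraic multiplicity, as roots of the characteristic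
  polynomial), real parts, sorted in decreasing order; entry j of this list
  is the (j+1)-th largest eigenvalue.  For Hermitian matrices all eigenvalues are real.\<close>
definition eigs_desc :: "complex mat \<Rightarrow> real list" where
  "eigs_desc A = rev (sorted_list_of_multiset (image_mset Re (proots (char_poly A))))"

definition vnorm :: "complex vec \<Rightarrow> real" where
  "vnorm v = sqrt (\<Sum>i<dim_vec v. (cmod (v $ i))\<^sup>2)"

definition opnorm :: "complex mat \<Rightarrow> real" where
  "opnorm A = Sup {vnorm (A *\<^sub>v v) | v. v \<in> carrier_vec (dim_col A) \<and> vnorm v \<le> 1}"

end

theory Submission
  imports Defs
begin

lemma adj_dim[simp]: "dim_row (mat_adjoint (A::complex mat)) = dim_col A" "dim_col (mat_adjoint A) = dim_row A"
  unfolding mat_adjoint_def by (auto simp: mat_of_rows_def)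

lemma adj_index[simp]: "i < dim_col (A::complex mat) \<Longrightarrow> j < dim_row A \<Longrightarrow> mat_adjoint A $$ (i,j) = cnj (A $$ (j,i))"
  unfolding mat_adjoint_def by (auto simp: mat_of_rows_index)

lemma adj_carrier[simp]: "(A::complex mat) \<in> carrier_mat n m \<Longrightarrow> mat_adjoint A \<in> carrier_mat m n"
  by (metis adj_dim carrier_matD carrier_matI)

lemma mult_index_sum: assumes "(A::complex mat) \<in> carrier_mat n m" "B \<in> carrier_mat m k" "i < n" "j < k"
  shows "(A * B) $$ (i,j) = (\<Sum>l<m. A $$ (i,l) * B $$ (l,j))"
proof -
  have "(A*B) $$ (i,j) = row A i \<bullet> col B j" using assms by simp
  also have "\<dots> = (\<Sum>l\<in>{0..<m}. row A i $ l * col B j $ l)" unfolding scalar_prod_def using assms by simp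
  also have "\<dots> = (\<Sum>l<m. A $$ (i,l) * B $$ (l,j))" unfolding atLeast0LessThan using assms by (intro sum.cong) auto
  finally show ?thesis .
qed
lemma mult_vec_index_sum: assumes "(A::complex mat) \<in> carrier_mat n m" "v \<in> carrier_vec m" "i < n"
  shows "(A *\<^sub>v v) $ i = (\<Sum>l<m. A $$ (i,l) * v $ l)"
proof -
  have "(A *\<^sub>v v) $ i = row A i \<bullet> v" using assms by simp
  also have "\<dots> = (\<Sum>l\<in>{0..<m}. row A i $ l * v $ l)" unfolding scalar_prod_def using assms by simp
  also have "\<dots> = (\<Sum>l<m. A $$ (i,l) * v $ l)" unfolding atLeast0LessThan using assms by (intro sum.cong) auto
  finally show ?thesis .
qed
lemma cscalar_sum: assumes "(v::complex vec) \<in> carrier_vec n" "w \<in> carrier_vec n"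
  shows "v \<bullet>c w = (\<Sum>i<n. v $ i * cnj (w $ i))"
proof -
  have "v \<bullet>c w = (\<Sum>i\<in>{0..<n}. v $ i * conjugate w $ i)" unfolding scalar_prod_def using assms by simp
  also have "\<dots> = (\<Sum>i<n. v $ i * cnj (w $ i))" unfolding atLeast0LessThan using assms by (intro sum.cong) auto
  finally show ?thesis .
qed
lemma adj_mult: assumes A: "(A::complex mat) \<in> carrier_mat n m" and B: "B \<in> carrier_mat m k"
  shows "mat_adjoint (A * B) = mat_adjoint B * mat_adjoint A"
proof (rule eq_matI)
  fix i j assume "i < dim_row (mat_adjoint B * mat_adjoint A)" "j < dim_col (mat_adjoint B * mat_adjoint A)"
  then have ij: "i < k" "j < n" using assms by auto
  have "(mat_adjoint B * mat_adjoint A) $$ (i,j) = (\<Sum>l<m. mat_adjoint B $$ (i,l) * mat_adjoint A $$ (l,j))"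
    by (rule mult_index_sum[OF adj_carrier[OF B] adj_carrier[OF A] ij])
  also have "\<dots> = (\<Sum>l<m. cnj (B $$ (l,i)) * cnj (A $$ (j,l)))"
    using A B ij by (intro sum.cong) auto
  also have "\<dots> = cnj ((A * B) $$ (j,i))"
    by (subst mult_index_sum[OF A B ij(2) ij(1)]) (simp add: mult.commute)
  also have "\<dots> = mat_adjoint (A * B) $$ (i,j)" using A B ij by simp
  finally show "mat_adjoint (A * B) $$ (i, j) = (mat_adjoint B * mat_adjoint A) $$ (i, j)" by simp
qed (use assms in auto)

lemma adj_adj[simp]: "mat_adjoint (mat_adjoint (A::complex mat)) = A"
proof (rule eq_matI)
  fix i j assume "i < dim_row A" "j < dim_col A"
  then show "mat_adjoint (mat_adjoint A) $$ (i, j) = A $$ (i, j)" by simp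
qed auto

lemma adj_add: "(A::complex mat) \<in> carrier_mat n m \<Longrightarrow> B \<in> carrier_mat n m \<Longrightarrow> mat_adjoint (A + B) = mat_adjoint A + mat_adjoint B"
  by (rule eq_matI) auto

lemma adj_minus: "(A::complex mat) \<in> carrier_mat n m \<Longrightarrow> B \<in> carrier_mat n m \<Longrightarrow> mat_adjoint (A - B) = mat_adjoint A - mat_adjoint B"
  by (rule eq_matI) auto

lemma adj_one[simp]: "mat_adjoint (1\<^sub>m n) = (1\<^sub>m n :: complex mat)"
  by (rule eq_matI) auto

lemma adj_inner: assumes A: "(A::complex mat) \<in> carrier_mat n m" and v: "v \<in> carrier_vec m" and w: "w \<in> carrier_vec n"
  shows "(A *\<^sub>v v) \<bullet>c w = v \<bullet>c (mat_adjoint A *\<^sub>v w)"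
proof -
  have aw: "mat_adjoint A *\<^sub>v w \<in> carrier_vec m" using A w by (meson adj_carrier mult_mat_vec_carrier)
  have "(A *\<^sub>v v) \<bullet>c w = (\<Sum>i<n. (\<Sum>l<m. A $$ (i,l) * v $ l) * cnj (w $ i))"
    using A v w by (auto simp: cscalar_sum[of _ n] mult_vec_index_sum[of _ n m] simp del: index_mult_mat_vec intro!: sum.cong)
  also have "\<dots> = (\<Sum>l<m. \<Sum>i<n. A $$ (i,l) * v $ l * cnj (w $ i))"
    by (simp add: sum_distrib_right sum.swap[of _ "{..<n}"])
  also have "\<dots> = (\<Sum>l<m. v $ l * cnj (\<Sum>i<n. cnj (A $$ (i,l)) * w $ i))"
    by (simp add: sum_distrib_left mult_ac)
  also have "\<dots> = (\<Sum>l<m. v $ l * cnj (\<Sum>i<n. mat_adjoint A $$ (l,i) * w $ i))"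
    using A by (intro sum.cong refl arg_cong[where f="\<lambda>x. _ * cnj x"]) auto
  also have "\<dots> = v \<bullet>c (mat_adjoint A *\<^sub>v w)"
    using A v w aw by (auto simp: cscalar_sum[of _ m] mult_vec_index_sum[of _ m n] simp del: index_mult_mat_vec intro!: sum.cong)
  finally show ?thesis .
qed

definition unitary :: "nat \<Rightarrow> complex mat \<Rightarrow> bool" where
  "unitary n U \<longleftrightarrow> U \<in> carrier_mat n n \<and> mat_adjoint U * U = 1\<^sub>m n \<and> U * mat_adjoint U = 1\<^sub>m n"

definition dg :: "nat \<Rightarrow> (nat \<Rightarrow> real) \<Rightarrow> complex mat" where
  "dg n d = mat n n (\<lambda>(i,j). if i = j then complex_of_real (d i) else 0)"

lemma dg_carrier[simp]: "dg n d \<in> carrier_mat n n" by (simp add: dg_def)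
lemma dg_index[simp]: "i < n \<Longrightarrow> j < n \<Longrightarrow> dg n d $$ (i,j) = (if i = j then complex_of_real (d i) else 0)"
  by (simp add: dg_def)
lemma dg_dim[simp]: "dim_row (dg n d) = n" "dim_col (dg n d) = n" by (auto simp: dg_def)

lemma adj_dg[simp]: "mat_adjoint (dg n d) = dg n d"
  by (rule eq_matI) auto

lemma unitary_adj: "unitary n U \<Longrightarrow> unitary n (mat_adjoint U)"
  unfolding unitary_def by auto

lemma unitary_mult: assumes "unitary n U" "unitary n V" shows "unitary n (U * V)"
proof -
  have c: "U \<in> carrier_mat n n" "V \<in> carrier_mat n n" using assms unfolding unitary_def by auto
  have a: "mat_adjoint U \<in> carrier_mat n n" "mat_adjoint V \<in> carrier_mat n n" using c by auto
  have "mat_adjoint (U * V) * (U * V) = mat_adjoint V * mat_adjoint U * (U * V)"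
    using c a by (simp add: adj_mult[of _ n n _ n])
  also have "\<dots> = mat_adjoint V * (mat_adjoint U * (U * V))"
    by (rule assoc_mult_mat[of _ n n _ n _ n]) (use c a in auto)
  also have "mat_adjoint U * (U * V) = (mat_adjoint U * U) * V"
    by (rule assoc_mult_mat[symmetric, of _ n n _ n _ n]) (use c a in auto)
  also have "\<dots> = V" using assms c unfolding unitary_def by simp
  finally have 1: "mat_adjoint (U * V) * (U * V) = 1\<^sub>m n" using assms unfolding unitary_def by simp
  have "(U * V) * mat_adjoint (U * V) = (U * V) * (mat_adjoint V * mat_adjoint U)"
    using c a by (simp add: adj_mult[of _ n n _ n])
  also have "\<dots> = U * (V * (mat_adjoint V * mat_adjoint U))"
    by (rule assoc_mult_mat[of _ n n _ n _ n]) (use c a in auto)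
  also have "V * (mat_adjoint V * mat_adjoint U) = (V * mat_adjoint V) * mat_adjoint U"
    by (rule assoc_mult_mat[symmetric, of _ n n _ n _ n]) (use c a in auto)
  also have "\<dots> = mat_adjoint U" using assms a unfolding unitary_def by (simp add: left_mult_one_mat[of _ n n])
  finally show ?thesis using 1 c assms unfolding unitary_def by auto
qed

lemma mat_unit_index: assumes "(A::complex mat) \<in> carrier_mat n m" "i < n" "j < m"
  shows "(A *\<^sub>v unit_vec m j) $ i = A $$ (i,j)"
proof -
  have "(A *\<^sub>v unit_vec m j) $ i = (\<Sum>l<m. A $$ (i,l) * unit_vec m j $ l)"
    by (rule mult_vec_index_sum[OF assms(1) _ assms(2)]) simp
  also have "\<dots> = (\<Sum>l<m. if l = j then A $$ (i,l) else 0)"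
    using assms by (intro sum.cong) auto
  also have "\<dots> = A $$ (i,j)" using assms by simp
  finally show ?thesis .
qed

lemma mat_eq_by_vec: assumes A: "(A::complex mat) \<in> carrier_mat n m" and B: "B \<in> carrier_mat n m"
  and eq: "\<And>v. v \<in> carrier_vec m \<Longrightarrow> A *\<^sub>v v = B *\<^sub>v v"
shows "A = B"
proof (rule eq_matI)
  fix i j assume "i < dim_row B" "j < dim_col B"
  then have ij: "i < n" "j < m" using B by auto
  have "A $$ (i,j) = (A *\<^sub>v unit_vec m j) $ i" using mat_unit_index[OF A ij] by simp
  also have "\<dots> = (B *\<^sub>v unit_vec m j) $ i" using eq[of "unit_vec m j"] by simp
  also have "\<dots> = B $$ (i,j)" using mat_unit_index[OF B ij] .
  finally show "A $$ (i,j) = B $$ (i,j)" .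
qed (use A B in auto)

lemma cnj_mult_self: "z * cnj z = complex_of_real ((cmod z)^2)"
  using complex_norm_square[of z] by simp

lemma cscalar_self: assumes "(v::complex vec) \<in> carrier_vec n"
  shows "v \<bullet>c v = complex_of_real (\<Sum>i<n. (cmod (v $ i))^2)"
  using assms by (simp add: cscalar_sum[of _ n] cnj_mult_self)

definition hhc :: "complex vec \<Rightarrow> real" where
  "hhc u = (if (\<Sum>i<dim_vec u. (cmod (u $ i))^2) = 0 then 0 else 2 / (\<Sum>i<dim_vec u. (cmod (u $ i))^2))"

definition hh :: "complex vec \<Rightarrow> complex mat" where
  "hh u = mat (dim_vec u) (dim_vec u) (\<lambda>(i,j). (if i = j then 1 else 0) - complex_of_real (hhc u) * u $ i * cnj (u $ j))"

lemma hh_carrier[simp]: assumes "u \<in> carrier_vec n" shows "hh u \<in> carrier_mat n n"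
proof -
  have d: "dim_vec u = n" using assms by (rule carrier_vecD)
  show ?thesis unfolding hh_def d by (rule mat_carrier)
qed

lemma hh_dim[simp]: "dim_row (hh u) = dim_vec u" "dim_col (hh u) = dim_vec u"
  unfolding hh_def by auto

lemma hh_vec_carrier[simp]: assumes "u \<in> carrier_vec n" "(v::complex vec) \<in> carrier_vec n"
  shows "hh u *\<^sub>v v \<in> carrier_vec n"
proof -
  have "hh u \<in> carrier_mat n n" using hh_carrier[OF assms(1)] .
  then show ?thesis using mult_mat_vec_carrier assms(2) by blast
qed

lemma hh_comp: assumes u: "u \<in> carrier_vec n" and v: "v \<in> carrier_vec n" and i: "i < n"
  shows "(hh u *\<^sub>v v) $ i = v $ i - complex_of_real (hhc u) * (v \<bullet>c u) * u $ i"
proof -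
  let ?c = "complex_of_real (hhc u)"
  have du: "dim_vec u = n" using u by auto
  have "(hh u *\<^sub>v v) $ i = (\<Sum>l<n. hh u $$ (i,l) * v $ l)"
    by (rule mult_vec_index_sum[OF hh_carrier[OF u] v i])
  also have "\<dots> = (\<Sum>l<n. ((if i = l then 1 else 0) - ?c * u $ i * cnj (u $ l)) * v $ l)"
    using i du by (intro sum.cong) (auto simp: hh_def)
  also have "\<dots> = (\<Sum>l<n. (if i = l then v $ l else 0)) - (\<Sum>l<n. ?c * u $ i * (v $ l * cnj (u $ l)))"
    by (subst sum_subtractf[symmetric]) (intro sum.cong, auto simp: algebra_simps)
  also have "\<dots> = v $ i - ?c * u $ i * (v \<bullet>c u)"
    using i u v by (simp add: cscalar_sum[of _ n] sum_distrib_left)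
  finally show ?thesis by (simp add: mult_ac)
qed

lemma hh_comp_dummy: "True" by simp

lemma hh_vec: assumes u: "u \<in> carrier_vec n" and v: "v \<in> carrier_vec n"
  shows "hh u *\<^sub>v v = v - (complex_of_real (hhc u) * (v \<bullet>c u)) \<cdot>\<^sub>v u"
proof (rule eq_vecI)
  fix i assume "i < dim_vec (v - (complex_of_real (hhc u) * (v \<bullet>c u)) \<cdot>\<^sub>v u)"
  then have i: "i < n" using u by simp
  show "(hh u *\<^sub>v v) $ i = (v - (complex_of_real (hhc u) * (v \<bullet>c u)) \<cdot>\<^sub>v u) $ i"
    using hh_comp[OF u v i] u v i by simp
qed (use u v in simp)

lemma hh_adj: assumes u: "u \<in> carrier_vec n" shows "mat_adjoint (hh u) = hh u"
proof (rule eq_matI)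
  fix i j assume "i < dim_row (hh u)" "j < dim_col (hh u)"
  then have ij: "i < n" "j < n" using u by auto
  show "mat_adjoint (hh u) $$ (i, j) = hh u $$ (i, j)"
    using ij u by (simp add: hh_def)
qed (use u in auto)

lemma hh_inner: assumes u: "u \<in> carrier_vec n" and v: "v \<in> carrier_vec n"
  shows "(hh u *\<^sub>v v) \<bullet>c u = (v \<bullet>c u) * (1 - complex_of_real (hhc u * (\<Sum>i<n. (cmod (u $ i))^2)))"
proof -
  let ?c = "complex_of_real (hhc u)"
  have hv: "hh u *\<^sub>v v \<in> carrier_vec n" using u v by simp
  have "(hh u *\<^sub>v v) \<bullet>c u = (\<Sum>i<n. (v $ i - ?c * (v \<bullet>c u) * u $ i) * cnj (u $ i))"
    using u v hv by (subst cscalar_sum[of _ n]) (auto simp: hh_comp[OF u v] simp del: index_mult_mat_vec intro!: sum.cong)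
  also have "\<dots> = (\<Sum>i<n. v $ i * cnj (u $ i)) - ?c * (v \<bullet>c u) * (\<Sum>i<n. u $ i * cnj (u $ i))"
    by (simp add: algebra_simps sum_subtractf sum_distrib_left)
  also have "\<dots> = (v \<bullet>c u) - ?c * (v \<bullet>c u) * (u \<bullet>c u)"
    using u v by (simp add: cscalar_sum[of _ n])
  also have "\<dots> = (v \<bullet>c u) * (1 - complex_of_real (hhc u * (\<Sum>i<n. (cmod (u $ i))^2)))"
    using cscalar_self[OF u] by (simp add: algebra_simps)
  finally show ?thesis .
qed

lemma hhc_prop: assumes u: "u \<in> carrier_vec n"
  shows "hhc u * (2 - hhc u * (\<Sum>i<n. (cmod (u $ i))^2)) = 0"
proof (cases "(\<Sum>i<n. (cmod (u $ i))^2) = 0")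
  case True
  then show ?thesis using u unfolding hhc_def by simp
next
  case False
  then have "hhc u = 2 / (\<Sum>i<n. (cmod (u $ i))^2)" using u unfolding hhc_def by simp
  then show ?thesis using False by simp
qed

lemma hh_invol: assumes u: "u \<in> carrier_vec n" and v: "v \<in> carrier_vec n"
  shows "hh u *\<^sub>v (hh u *\<^sub>v v) = v"
proof (rule eq_vecI)
  let ?c = "complex_of_real (hhc u)"
  let ?s = "(\<Sum>i<n. (cmod (u $ i))^2)"
  have hv: "hh u *\<^sub>v v \<in> carrier_vec n" using u v by simp
  fix i assume "i < dim_vec v"
  then have i: "i < n" using v by auto
  have "(hh u *\<^sub>v (hh u *\<^sub>v v)) $ i = v $ i - ?c * (v \<bullet>c u) * u $ i
      - ?c * ((v \<bullet>c u) * (1 - complex_of_real (hhc u * ?s))) * u $ i"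
    using hh_comp[OF u hv i] hh_comp[OF u v i] hh_inner[OF u v] by simp
  also have "\<dots> = v $ i - complex_of_real (hhc u * (2 - hhc u * ?s)) * (v \<bullet>c u) * u $ i"
    by (simp add: algebra_simps)
  also have "complex_of_real (hhc u * (2 - hhc u * ?s)) = 0" using hhc_prop[OF u] by (simp only: of_real_eq_0_iff)
  finally show "(hh u *\<^sub>v (hh u *\<^sub>v v)) $ i = v $ i" by simp
qed (use u v in auto)

lemma hh_unitary: assumes u: "u \<in> carrier_vec n" shows "unitary n (hh u)"
proof -
  have hh2: "hh u * hh u = 1\<^sub>m n"
  proof (rule mat_eq_by_vec[of _ n n])
    show "hh u * hh u \<in> carrier_mat n n" using u by (meson hh_carrier mult_carrier_mat)
    fix v :: "complex vec" assume v: "v \<in> carrier_vec n"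
    have "hh u * hh u *\<^sub>v v = hh u *\<^sub>v (hh u *\<^sub>v v)"
      by (rule assoc_mult_mat_vec[OF hh_carrier[OF u] hh_carrier[OF u] v])
    also have "\<dots> = v" by (rule hh_invol[OF u v])
    finally show "hh u * hh u *\<^sub>v v = 1\<^sub>m n *\<^sub>v v" using v by simp
  qed simp
  show ?thesis unfolding unitary_def using hh2 hh_adj[OF u] u by auto
qed

lemma sum_unit_left: fixes k n :: nat assumes "k < n" shows "(\<Sum>l<n. (if l = k then 1 else 0) * (f l :: complex)) = f k"
proof -
  have "(\<Sum>l<n. (if l = k then 1 else 0) * f l) = (\<Sum>l<n. if l = k then f l else 0)"
    by (intro sum.cong) auto
  also have "\<dots> = f k" using sum.delta[OF finite_lessThan[of n], of k f] assms by simp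
  finally show ?thesis .
qed

lemma minus_zero_smult[simp]: assumes "(v::complex vec) \<in> carrier_vec n" "w \<in> carrier_vec n"
  shows "v - 0 \<cdot>\<^sub>v w = v"
proof (rule eq_vecI)
  fix i assume "i < dim_vec v" then show "(v - 0 \<cdot>\<^sub>v w) $ i = v $ i" using assms by simp
qed (use assms in simp)

lemma hh_maps: assumes y: "y \<in> carrier_vec n" and k: "k < n"
  and ny: "(\<Sum>i<n. (cmod (y $ i))^2) = 1" and yk: "Im (y $ k) = 0"
  and y0: "\<And>i. i < k \<Longrightarrow> y $ i = 0"
  shows "hh (unit_vec n k - y) *\<^sub>v unit_vec n k = y"
    "\<And>j. j < k \<Longrightarrow> hh (unit_vec n k - y) *\<^sub>v unit_vec n j = unit_vec n j"
proof -
  define x :: "complex vec" where "x = unit_vec n k"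
  define u where "u = x - y"
  have x: "x \<in> carrier_vec n" unfolding x_def by simp
  have u: "u \<in> carrier_vec n" unfolding u_def using x y by simp
  have ui: "u $ i = (if i = k then 1 else 0) - y $ i" if "i < n" for i
    unfolding u_def x_def using that y k by simp
  define r where "r = Re (y $ k)"
  have ykr: "y $ k = complex_of_real r" unfolding r_def using yk by (simp add: complex_eq_iff)
  have xu: "x \<bullet>c u = 1 - complex_of_real r"
  proof -
    have "x \<bullet>c u = (\<Sum>l<n. (if l = k then 1 else 0) * cnj (u $ l))"
      using x u k by (subst cscalar_sum[of _ n]) (auto simp: x_def intro!: sum.cong)
    also have "\<dots> = cnj (u $ k)" by (rule sum_unit_left[OF k])
    also have "\<dots> = 1 - complex_of_real r" using ui[OF k] ykr by simp
    finally show ?thesis .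
  qed
  have yy: "y \<bullet>c y = 1" using cscalar_self[OF y] ny by simp
  have xy: "x \<bullet>c y = complex_of_real r"
  proof -
    have "x \<bullet>c y = (\<Sum>l<n. (if l = k then 1 else 0) * cnj (y $ l))"
      using x y k by (subst cscalar_sum[of _ n]) (auto simp: x_def intro!: sum.cong)
    also have "\<dots> = cnj (y $ k)" by (rule sum_unit_left[OF k])
    finally show ?thesis using ykr by simp
  qed
  have yx: "y \<bullet>c x = complex_of_real r"
  proof -
    have "y \<bullet>c x = (\<Sum>l<n. (if l = k then 1 else 0) * y $ l)"
      using x y k by (subst cscalar_sum[of _ n]) (auto simp: x_def intro!: sum.cong)
    also have "\<dots> = y $ k" by (rule sum_unit_left[OF k])
    finally show ?thesis using ykr by simp
  qed
  have xx: "x \<bullet>c x = 1"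
  proof -
    have "x \<bullet>c x = (\<Sum>l<n. (if l = k then 1 else 0) * cnj (x $ l))"
      using x k by (subst cscalar_sum[of _ n]) (auto simp: x_def intro!: sum.cong)
    also have "\<dots> = cnj (x $ k)" by (rule sum_unit_left[OF k])
    finally show ?thesis using k by (simp add: x_def)
  qed
  have uu: "u \<bullet>c u = x \<bullet>c x - x \<bullet>c y - y \<bullet>c x + y \<bullet>c y"
  proof -
    have "u \<bullet>c u = (\<Sum>l<n. (x $ l - y $ l) * cnj (x $ l - y $ l))"
      using u x y by (subst cscalar_sum[of _ n]) (auto simp: u_def intro!: sum.cong)
    also have "\<dots> = (\<Sum>l<n. x $ l * cnj (x $ l)) - (\<Sum>l<n. x $ l * cnj (y $ l)) - (\<Sum>l<n. y $ l * cnj (x $ l)) + (\<Sum>l<n. y $ l * cnj (y $ l))"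
      by (simp add: algebra_simps sum.distrib sum_subtractf)
    finally show ?thesis using x y by (simp add: cscalar_sum[of _ n])
  qed
  have s: "(\<Sum>i<n. (cmod (u $ i))^2) = 2 - 2 * r"
  proof -
    have "complex_of_real (\<Sum>i<n. (cmod (u $ i))^2) = complex_of_real (2 - 2 * r)"
      using uu xx xy yx yy cscalar_self[OF u] by simp
    then show ?thesis by (simp only: of_real_eq_iff)
  qed
  show "hh (unit_vec n k - y) *\<^sub>v unit_vec n k = y"
  proof (cases "r = 1")
    case True
    then have s0: "(\<Sum>i<n. (cmod (u $ i))^2) = 0" using s by simp
    have u0: "u $ i = 0" if "i < n" for i
    proof -
      have "(cmod (u $ i))^2 = 0"
        using s0 sum_nonneg_eq_0_iff[of "{..<n}" "\<lambda>i. (cmod (u $ i))^2"] that by simp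
      then show ?thesis by simp
    qed
    have xy': "x = y"
    proof (rule eq_vecI)
      fix i assume "i < dim_vec y"
      then have i: "i < n" using y by simp
      show "x $ i = y $ i" using u0[OF i] i y unfolding u_def by simp
    qed (use x y in simp)
    have "hhc u = 0" using s0 u unfolding hhc_def by simp
    then have "hh u *\<^sub>v x = x"
    proof (intro eq_vecI)
      fix i assume "hhc u = 0" "i < dim_vec x"
      then show "(hh u *\<^sub>v x) $ i = x $ i" using hh_comp[OF u x] x by simp
    qed (use u x in simp)
    then show ?thesis using xy' unfolding u_def x_def by simp
  next
    case False
    then have c: "hhc u * (1 - r) = 1" using s u unfolding hhc_def by (simp add: field_simps)
    have "hh u *\<^sub>v x = y"
    proof (rule eq_vecI)
      fix i assume "i < dim_vec y"
      then have i: "i < n" using y by simp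
      have "(hh u *\<^sub>v x) $ i = x $ i - complex_of_real (hhc u) * (1 - complex_of_real r) * u $ i"
        using hh_comp[OF u x i] xu by simp
      also have "complex_of_real (hhc u) * (1 - complex_of_real r) = 1"
        using c by (metis of_real_1 of_real_diff of_real_mult)
      finally show "(hh u *\<^sub>v x) $ i = y $ i" using i x y unfolding u_def by simp
    qed (use u y in simp)
    then show ?thesis unfolding u_def x_def .
  qed
  fix j assume j: "j < k"
  have ej: "unit_vec n j \<in> carrier_vec n" by simp
  have "unit_vec n j \<bullet>c u = (\<Sum>l<n. (if l = j then 1 else 0) * cnj (u $ l))"
    using u j k by (subst cscalar_sum[of _ n]) (auto intro!: sum.cong)
  also have "\<dots> = cnj (u $ j)" using j k by (intro sum_unit_left) simp
  also have "\<dots> = 0" using ui[of j] j k y0[OF j] by simp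
  finally have "unit_vec n j \<bullet>c u = 0" .
  then show "hh (unit_vec n k - y) *\<^sub>v unit_vec n j = unit_vec n j"
    using hh_vec[OF u ej] minus_zero_smult[OF ej u] unfolding u_def x_def by simp
qed

lemma sum_shift_zero: fixes f :: "nat \<Rightarrow> complex" and k n :: nat assumes "k \<le> n" "\<And>l. l < k \<Longrightarrow> f l = (0::complex)"
  shows "(\<Sum>l<n. f l) = (\<Sum>l<n - k. f (l + k))"
proof -
  have "(\<Sum>l<n. f l) = (\<Sum>l\<in>{0..<k}. f l) + (\<Sum>l\<in>{k..<n}. f l)"
    using assms(1) by (metis atLeast0LessThan sum.atLeastLessThan_concat zero_le)
  also have "(\<Sum>l\<in>{0..<k}. f l) = 0" using assms(2) by simp
  also have "(\<Sum>l\<in>{k..<n}. f l) = (\<Sum>l\<in>{0 + k..<(n - k) + k}. f l)" using assms(1) by simp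
  also have "\<dots> = (\<Sum>l\<in>{0..<n - k}. f (l + k))" by (rule sum.shift_bounds_nat_ivl)
  finally show ?thesis by (simp add: atLeast0LessThan)
qed

lemma mult3_carrier: assumes "(A::complex mat) \<in> carrier_mat n n" "B \<in> carrier_mat n n" "C \<in> carrier_mat n n"
  shows "A * B * C \<in> carrier_mat n n"
proof -
  have "A * B \<in> carrier_mat n n" using assms(1,2) by (rule mult_carrier_mat)
  then show ?thesis using assms(3) by (rule mult_carrier_mat)
qed

lemma mat3_vec: assumes "(A::complex mat) \<in> carrier_mat n n" "B \<in> carrier_mat n n" "C \<in> carrier_mat n n" "v \<in> carrier_vec n"
  shows "(A * B * C) *\<^sub>v v = A *\<^sub>v (B *\<^sub>v (C *\<^sub>v v))"
proof -
  have AB: "A * B \<in> carrier_mat n n" using assms(1,2) by (rule mult_carrier_mat)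
  have "(A * B * C) *\<^sub>v v = (A * B) *\<^sub>v (C *\<^sub>v v)" by (rule assoc_mult_mat_vec[OF AB assms(3,4)])
  also have "\<dots> = A *\<^sub>v (B *\<^sub>v (C *\<^sub>v v))"
    by (rule assoc_mult_mat_vec[OF assms(1,2)]) (rule mult_mat_vec_carrier[OF assms(3,4)])
  finally show ?thesis .
qed

lemma herm_conj_mat: assumes Ac: "(A::complex mat) \<in> carrier_mat n n" and Aa: "mat_adjoint A = A"
  and U: "U \<in> carrier_mat n n"
  shows "mat_adjoint (mat_adjoint U * A * U) = mat_adjoint U * A * U"
proof -
  have Ua: "mat_adjoint U \<in> carrier_mat n n" using U by simp
  have UA: "mat_adjoint U * A \<in> carrier_mat n n" using Ua Ac by (rule mult_carrier_mat)
  have "mat_adjoint (mat_adjoint U * A * U) = mat_adjoint U * mat_adjoint (mat_adjoint U * A)"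
    by (rule adj_mult[OF UA U])
  also have "mat_adjoint (mat_adjoint U * A) = mat_adjoint A * mat_adjoint (mat_adjoint U)"
    by (rule adj_mult[OF Ua Ac])
  also have "\<dots> = A * U" using Aa by simp
  also have "mat_adjoint U * (A * U) = mat_adjoint U * A * U"
    by (rule assoc_mult_mat[symmetric, OF Ua Ac U])
  finally show ?thesis .
qed

definition diag_upto :: "nat \<Rightarrow> complex mat \<Rightarrow> nat \<Rightarrow> bool" where
  "diag_upto n T k \<longleftrightarrow> (\<forall>j<k. \<exists>t. T *\<^sub>v unit_vec n j = t \<cdot>\<^sub>v unit_vec n j)"

lemma spectral_step:
  assumes A: "hermitian_mat n A" and k: "k < n" and U: "unitary n U"
    and D: "diag_upto n (mat_adjoint U * A * U) k"
  shows "\<exists>U'. unitary n U' \<and> diag_upto n (mat_adjoint U' * A * U') (Suc k)"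
proof -
  define T where "T = mat_adjoint U * A * U"
  have Ac: "A \<in> carrier_mat n n" and Aa: "mat_adjoint A = A" using A unfolding hermitian_mat_def by auto
  have Uc: "U \<in> carrier_mat n n" using U unfolding unitary_def by auto
  have Ua: "mat_adjoint U \<in> carrier_mat n n" using Uc by simp
  have Tc: "T \<in> carrier_mat n n" unfolding T_def by (rule mult3_carrier[OF Ua Ac Uc])
  have Ta: "mat_adjoint T = T" unfolding T_def by (rule herm_conj_mat[OF Ac Aa Uc])
  have Tidx: "T $$ (i,j) = cnj (T $$ (j,i))" if "i < n" "j < n" for i j
  proof -
    have "T $$ (i,j) = mat_adjoint T $$ (i,j)" using Ta by simp
    also have "\<dots> = cnj (T $$ (j,i))" using that Tc by simp
    finally show ?thesis .
  qed
  have Tcol: "T $$ (i,j) = 0" if ij: "i < n" "j < k" "i \<noteq> j" for i j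
  proof -
    obtain t where t: "T *\<^sub>v unit_vec n j = t \<cdot>\<^sub>v unit_vec n j"
      using D ij unfolding diag_upto_def T_def by blast
    have jn: "j < n" using ij k by simp
    have "T $$ (i,j) = (T *\<^sub>v unit_vec n j) $ i" using mat_unit_index[OF Tc ij(1) jn] by simp
    also have "\<dots> = 0" using t ij jn by simp
    finally show ?thesis .
  qed
  have Trow: "T $$ (i,j) = 0" if "i < k" "j < n" "k \<le> j" for i j
    using Tidx[of i j] Tcol[of j i] that k by simp
  define m where "m = n - k"
  define T3 where "T3 = mat m m (\<lambda>(i,j). T $$ (i+k, j+k))"
  have T3c: "T3 \<in> carrier_mat m m" unfolding T3_def by (rule mat_carrier)
  obtain as where cp: "char_poly T3 = (\<Prod>a\<leftarrow>as. [:-a,1:])" and las: "length as = m"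
    using char_poly_factorized[OF T3c] by blast
  have m0: "m > 0" using k unfolding m_def by simp
  then obtain e rest where as: "as = e # rest" using las by (cases as) auto
  have "poly (char_poly T3) e = 0" unfolding cp as by simp
  then have "eigenvalue T3 e" using eigenvalue_root_char_poly[OF T3c] by simp
  then obtain w where w: "w \<in> carrier_vec m" "w \<noteq> 0\<^sub>v m" "T3 *\<^sub>v w = e \<cdot>\<^sub>v w"
    unfolding eigenvalue_def eigenvector_def using T3c by auto
  define z where "z = vec n (\<lambda>i. if i < k then 0 else w $ (i - k))"
  have zc: "z \<in> carrier_vec n" unfolding z_def by simp
  have zlow: "z $ l = 0" if "l < k" for l using that k unfolding z_def by simp
  have zhigh: "z $ (l + k) = w $ l" if "l < m" for l using that k unfolding z_def m_def by simp
  have Tz: "T *\<^sub>v z = e \<cdot>\<^sub>v z"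
  proof (rule eq_vecI)
    fix i assume "i < dim_vec (e \<cdot>\<^sub>v z)"
    then have i: "i < n" using zc by simp
    have "(T *\<^sub>v z) $ i = (\<Sum>l<n. T $$ (i,l) * z $ l)" by (rule mult_vec_index_sum[OF Tc zc i])
    also have "\<dots> = (\<Sum>l<m. T $$ (i,l+k) * z $ (l + k))"
      unfolding m_def by (rule sum_shift_zero) (use k zlow in auto)
    also have "\<dots> = (\<Sum>l<m. T $$ (i,l+k) * w $ l)"
      by (intro sum.cong) (auto simp: zhigh)
    also have "\<dots> = e * z $ i"
    proof (cases "i < k")
      case True
      have "(\<Sum>l<m. T $$ (i,l+k) * w $ l) = 0"
        by (intro sum.neutral) (use True Trow m_def in auto)
      then show ?thesis using zlow[OF True] by simp
    next
      case False
      define i' where "i' = i - k"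
      have i': "i' < m" "i = i' + k" using False i unfolding i'_def m_def by auto
      have "(\<Sum>l<m. T $$ (i,l+k) * w $ l) = (\<Sum>l<m. T3 $$ (i',l) * w $ l)"
        by (intro sum.cong) (auto simp: T3_def i')
      also have "\<dots> = (T3 *\<^sub>v w) $ i'" by (rule mult_vec_index_sum[OF T3c w(1) i'(1), symmetric])
      also have "\<dots> = e * w $ i'" using w(3) w(1) i' by simp
      also have "\<dots> = e * z $ i" using zhigh[OF i'(1)] i' by simp
      finally show ?thesis .
    qed
    finally show "(T *\<^sub>v z) $ i = (e \<cdot>\<^sub>v z) $ i" using i zc by simp
  qed (use Tc zc in simp)
  obtain p where p: "p < m" "w $ p \<noteq> 0"
  proof -
    have "\<exists>p<m. w $ p \<noteq> 0"
    proof (rule ccontr)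
      assume "\<not> (\<exists>p<m. w $ p \<noteq> 0)"
      then have "w = 0\<^sub>v m" using w(1) by (intro eq_vecI) auto
      then show False using w(2) by simp
    qed
    then show ?thesis using that by blast
  qed
  define S where "S = (\<Sum>i<n. (cmod (z $ i))^2)"
  have Spos: "S > 0"
  proof -
    have "0 < (cmod (z $ (p + k)))^2" using zhigh[OF p(1)] p(2) by simp
    moreover have "p + k \<in> {..<n}" using p(1) unfolding m_def by simp
    ultimately show ?thesis unfolding S_def by (intro sum_pos2) auto
  qed
  define ph where "ph = (if z $ k = 0 then 1 else cnj (z $ k) / complex_of_real (cmod (z $ k)))"
  define \<alpha> where "\<alpha> = ph / complex_of_real (sqrt S)"
  define y where "y = \<alpha> \<cdot>\<^sub>v z"
  have yc: "y \<in> carrier_vec n" unfolding y_def using zc by simp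
  have yi: "y $ i = \<alpha> * z $ i" if "i < n" for i unfolding y_def using that zc by simp
  have Ty: "T *\<^sub>v y = e \<cdot>\<^sub>v y"
  proof -
    have "T *\<^sub>v y = \<alpha> \<cdot>\<^sub>v (T *\<^sub>v z)" unfolding y_def by (rule mult_mat_vec[OF Tc zc])
    also have "\<dots> = e \<cdot>\<^sub>v y" unfolding Tz y_def smult_smult_assoc by (simp add: mult.commute)
    finally show ?thesis .
  qed
  have cph: "cmod ph = 1" unfolding ph_def by (simp add: norm_divide)
  have ca: "(cmod \<alpha>)^2 = 1 / S" unfolding \<alpha>_def using Spos cph by (simp add: norm_divide power_divide)
  have ny: "(\<Sum>i<n. (cmod (y $ i))^2) = 1"
  proof -
    have "(\<Sum>i<n. (cmod (y $ i))^2) = (\<Sum>i<n. (cmod \<alpha>)^2 * (cmod (z $ i))^2)"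
      by (intro sum.cong) (auto simp: yi norm_mult power_mult_distrib)
    also have "\<dots> = (cmod \<alpha>)^2 * S" unfolding S_def by (simp add: sum_distrib_left)
    finally show ?thesis using ca Spos by simp
  qed
  have yk: "Im (y $ k) = 0"
  proof (cases "z $ k = 0")
    case True then show ?thesis using yi k by simp
  next
    case False
    have "ph * z $ k = complex_of_real (cmod (z $ k))"
      using False unfolding ph_def by (simp add: complex_norm_square[symmetric] power2_eq_square mult.commute[of "cnj _"] field_simps)
    then have "y $ k = complex_of_real (cmod (z $ k) / sqrt S)"
      using yi[OF k] unfolding \<alpha>_def by (simp add: field_simps)
    then show ?thesis by simp
  qed
  have y0: "y $ i = 0" if "i < k" for i using yi[of i] zlow[OF that] that k by simp
  define u where "u = unit_vec n k - y"
  define H where "H = hh u"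
  have uc: "u \<in> carrier_vec n" unfolding u_def using yc by simp
  have Hc: "H \<in> carrier_mat n n" unfolding H_def by (rule hh_carrier[OF uc])
  have HU: "unitary n H" unfolding H_def by (rule hh_unitary[OF uc])
  have Ha: "mat_adjoint H = H" unfolding H_def by (rule hh_adj[OF uc])
  have Hk: "H *\<^sub>v unit_vec n k = y" unfolding H_def u_def by (rule hh_maps(1)[OF yc k ny yk y0])
  have Hj: "H *\<^sub>v unit_vec n j = unit_vec n j" if "j < k" for j
    unfolding H_def u_def by (rule hh_maps(2)[OF yc k ny yk y0 that])
  have Hy: "H *\<^sub>v y = unit_vec n k"
    using hh_invol[OF uc, of "unit_vec n k"] Hk unfolding H_def by simp
  define U' where "U' = U * H"
  have U'u: "unitary n U'" unfolding U'_def by (rule unitary_mult[OF U HU])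
  have T': "(mat_adjoint U' * A * U') *\<^sub>v v = H *\<^sub>v (T *\<^sub>v (H *\<^sub>v v))" if v: "v \<in> carrier_vec n" for v
  proof -
    have U'c: "U' \<in> carrier_mat n n" unfolding U'_def using Uc Hc by (rule mult_carrier_mat)
    have aU': "mat_adjoint U' = H * mat_adjoint U" unfolding U'_def using adj_mult[OF Uc Hc] Ha by simp
    have Hv: "H *\<^sub>v v \<in> carrier_vec n" using Hc v by (rule mult_mat_vec_carrier)
    have "(mat_adjoint U' * A * U') *\<^sub>v v = mat_adjoint U' *\<^sub>v (A *\<^sub>v (U' *\<^sub>v v))"
      by (rule mat3_vec[OF _ Ac U'c v]) (use U'c in simp)
    also have "U' *\<^sub>v v = U *\<^sub>v (H *\<^sub>v v)" unfolding U'_def by (rule assoc_mult_mat_vec[OF Uc Hc v])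
    also have "mat_adjoint U' *\<^sub>v (A *\<^sub>v (U *\<^sub>v (H *\<^sub>v v))) = H *\<^sub>v (mat_adjoint U *\<^sub>v (A *\<^sub>v (U *\<^sub>v (H *\<^sub>v v))))"
      unfolding aU' by (rule assoc_mult_mat_vec[OF Hc Ua]) (use Ac Uc Hv in simp)
    also have "mat_adjoint U *\<^sub>v (A *\<^sub>v (U *\<^sub>v (H *\<^sub>v v))) = T *\<^sub>v (H *\<^sub>v v)"
      unfolding T_def by (rule mat3_vec[OF Ua Ac Uc Hv, symmetric])
    finally show ?thesis .
  qed
  have "diag_upto n (mat_adjoint U' * A * U') (Suc k)"
    unfolding diag_upto_def
  proof (intro allI impI)
    fix j assume j: "j < Suc k"
    show "\<exists>t. (mat_adjoint U' * A * U') *\<^sub>v unit_vec n j = t \<cdot>\<^sub>v unit_vec n j"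
    proof (cases "j < k")
      case True
      obtain t where t: "T *\<^sub>v unit_vec n j = t \<cdot>\<^sub>v unit_vec n j"
        using D True unfolding diag_upto_def T_def by blast
      have "(mat_adjoint U' * A * U') *\<^sub>v unit_vec n j = H *\<^sub>v (T *\<^sub>v (H *\<^sub>v unit_vec n j))"
        by (rule T') simp
      also have "\<dots> = H *\<^sub>v (t \<cdot>\<^sub>v unit_vec n j)" using Hj[OF True] t by simp
      also have "\<dots> = t \<cdot>\<^sub>v (H *\<^sub>v unit_vec n j)" by (rule mult_mat_vec[OF Hc]) simp
      also have "\<dots> = t \<cdot>\<^sub>v unit_vec n j" using Hj[OF True] by simp
      finally show ?thesis by blast
    next
      case False
      then have jk: "j = k" using j by simp
      have "(mat_adjoint U' * A * U') *\<^sub>v unit_vec n j = H *\<^sub>v (T *\<^sub>v (H *\<^sub>v unit_vec n k))"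
        unfolding jk by (rule T') simp
      also have "\<dots> = H *\<^sub>v (e \<cdot>\<^sub>v y)" using Hk Ty by simp
      also have "\<dots> = e \<cdot>\<^sub>v (H *\<^sub>v y)" by (rule mult_mat_vec[OF Hc yc])
      also have "\<dots> = e \<cdot>\<^sub>v unit_vec n j" using Hy jk by simp
      finally show ?thesis by blast
    qed
  qed
  then show ?thesis using U'u by blast
qed

lemma spectral_upto: assumes A: "hermitian_mat n A"
  shows "k \<le> n \<Longrightarrow> \<exists>U. unitary n U \<and> diag_upto n (mat_adjoint U * A * U) k"
proof (induction k)
  case 0
  have "unitary n (1\<^sub>m n)" unfolding unitary_def by simp
  then show ?case unfolding diag_upto_def by blast
next
  case (Suc k)
  then obtain U where "unitary n U" "diag_upto n (mat_adjoint U * A * U) k" by auto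
  then show ?case using spectral_step[OF A] Suc.prems by simp
qed

lemma unitary_vec: assumes U: "unitary n U" and v: "v \<in> carrier_vec n"
  shows "U *\<^sub>v (mat_adjoint U *\<^sub>v v) = v" "mat_adjoint U *\<^sub>v (U *\<^sub>v v) = v"
proof -
  have Uc: "U \<in> carrier_mat n n" using U unfolding unitary_def by auto
  have Ua: "mat_adjoint U \<in> carrier_mat n n" using Uc by simp
  have "U *\<^sub>v (mat_adjoint U *\<^sub>v v) = (U * mat_adjoint U) *\<^sub>v v"
    by (rule assoc_mult_mat_vec[OF Uc Ua v, symmetric])
  then show "U *\<^sub>v (mat_adjoint U *\<^sub>v v) = v" using U v unfolding unitary_def by simp
  have "mat_adjoint U *\<^sub>v (U *\<^sub>v v) = (mat_adjoint U * U) *\<^sub>v v"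
    by (rule assoc_mult_mat_vec[OF Ua Uc v, symmetric])
  then show "mat_adjoint U *\<^sub>v (U *\<^sub>v v) = v" using U v unfolding unitary_def by simp
qed

lemma spectral: assumes A: "hermitian_mat n A"
  shows "\<exists>U d. unitary n U \<and> A = U * dg n d * mat_adjoint U"
proof -
  obtain U where U: "unitary n U" and D: "diag_upto n (mat_adjoint U * A * U) n"
    using spectral_upto[OF A] by blast
  define T where "T = mat_adjoint U * A * U"
  have Ac: "A \<in> carrier_mat n n" and Aa: "mat_adjoint A = A" using A unfolding hermitian_mat_def by auto
  have Uc: "U \<in> carrier_mat n n" using U unfolding unitary_def by auto
  have Ua: "mat_adjoint U \<in> carrier_mat n n" using Uc by simp
  have Tc: "T \<in> carrier_mat n n" unfolding T_def by (rule mult3_carrier[OF Ua Ac Uc])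
  have Ta: "mat_adjoint T = T" unfolding T_def by (rule herm_conj_mat[OF Ac Aa Uc])
  define d where "d i = Re (T $$ (i,i))" for i
  have Td: "T = dg n d"
  proof (rule eq_matI)
    fix i j assume "i < dim_row (dg n d)" "j < dim_col (dg n d)"
    then have ij: "i < n" "j < n" by auto
    show "T $$ (i,j) = dg n d $$ (i,j)"
    proof (cases "i = j")
      case True
      have "T $$ (i,i) = mat_adjoint T $$ (i,i)" using Ta by simp
      also have "\<dots> = cnj (T $$ (i,i))" using ij Tc by simp
      finally have "Im (T $$ (i,i)) = 0" by (metis cnj.simps(2) neg_equal_zero complex.sel(2))
      then have "T $$ (i,i) = complex_of_real (d i)" unfolding d_def by (simp add: complex_eq_iff)
      then show ?thesis using True ij by simp
    next
      case False
      obtain t where t: "T *\<^sub>v unit_vec n j = t \<cdot>\<^sub>v unit_vec n j"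
        using D ij unfolding diag_upto_def T_def by blast
      have "T $$ (i,j) = (T *\<^sub>v unit_vec n j) $ i" using mat_unit_index[OF Tc ij] by simp
      also have "\<dots> = 0" using t ij False by simp
      finally show ?thesis using False ij by simp
    qed
  qed (use Tc in auto)
  have "U * T * mat_adjoint U = A"
  proof (rule mat_eq_by_vec[of _ n n])
    show "U * T * mat_adjoint U \<in> carrier_mat n n" by (rule mult3_carrier[OF Uc Tc Ua])
    show "A \<in> carrier_mat n n" by (rule Ac)
    fix v :: "complex vec" assume v: "v \<in> carrier_vec n"
    have Uv: "mat_adjoint U *\<^sub>v v \<in> carrier_vec n" using Ua v by (rule mult_mat_vec_carrier)
    have Av: "A *\<^sub>v v \<in> carrier_vec n" using Ac v by (rule mult_mat_vec_carrier)
    have "(U * T * mat_adjoint U) *\<^sub>v v = U *\<^sub>v (T *\<^sub>v (mat_adjoint U *\<^sub>v v))"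
      by (rule mat3_vec[OF Uc Tc Ua v])
    also have "T *\<^sub>v (mat_adjoint U *\<^sub>v v) = mat_adjoint U *\<^sub>v (A *\<^sub>v (U *\<^sub>v (mat_adjoint U *\<^sub>v v)))"
      unfolding T_def by (rule mat3_vec[OF Ua Ac Uc Uv])
    also have "U *\<^sub>v (mat_adjoint U *\<^sub>v v) = v" by (rule unitary_vec(1)[OF U v])
    also have "U *\<^sub>v (mat_adjoint U *\<^sub>v (A *\<^sub>v v)) = A *\<^sub>v v" by (rule unitary_vec(1)[OF U Av])
    finally show "(U * T * mat_adjoint U) *\<^sub>v v = A *\<^sub>v v" .
  qed
  then show ?thesis using U Td by blast
qed

lemma char_poly_dg: assumes U: "unitary n U" and A: "A = U * dg n d * mat_adjoint U"
  shows "char_poly A = (\<Prod>a\<leftarrow>map (\<lambda>i. complex_of_real (d i)) [0..<n]. [:- a, 1:])"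
proof -
  have Uc: "U \<in> carrier_mat n n" using U unfolding unitary_def by auto
  have Ua: "mat_adjoint U \<in> carrier_mat n n" using Uc by simp
  have Ac: "A \<in> carrier_mat n n" unfolding A by (rule mult3_carrier[OF Uc dg_carrier Ua])
  have "similar_mat_wit A (dg n d) U (mat_adjoint U)"
    by (rule similar_mat_witI[of _ _ n]) (use U Uc Ua Ac A in \<open>auto simp: unitary_def\<close>)
  then have "similar_mat A (dg n d)" unfolding similar_mat_def by blast
  then have "char_poly A = char_poly (dg n d)" by (rule char_poly_similar)
  also have "\<dots> = (\<Prod>a\<leftarrow>diag_mat (dg n d). [:- a, 1:])"
    by (rule char_poly_upper_triangular[OF dg_carrier]) (auto simp: upper_triangular_def)
  also have "diag_mat (dg n d) = map (\<lambda>i. complex_of_real (d i)) [0..<n]"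
    unfolding diag_mat_def by simp
  finally show ?thesis .
qed

lemma proots_lin_prod: "proots (\<Prod>a\<leftarrow>(cs::complex list). [:- a, 1:]) = mset cs"
proof (induction cs)
  case Nil then show ?case by simp
next
  case (Cons c cs)
  have nz: "(\<Prod>a\<leftarrow>cs. [:- a, 1:]) \<noteq> 0" unfolding prod_list_zero_iff by auto
  have e: "(\<Prod>a\<leftarrow>c # cs. [:- a, 1:]) = [:- c, 1:] * (\<Prod>a\<leftarrow>cs. [:- a, 1:])" by simp
  have "proots (\<Prod>a\<leftarrow>c # cs. [:- a, 1:]) = proots ([:- c, 1:] * (\<Prod>a\<leftarrow>cs. [:- a, 1:]))"
    by (simp only: e)
  also have "\<dots> = proots [:- c, 1:] + proots (\<Prod>a\<leftarrow>cs. [:- a, 1:])"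
    by (rule proots_mult) (use nz in auto)
  also have "\<dots> = {#c#} + mset cs" using Cons.IH proots_linear_factor[of "- c"] by simp
  finally show ?case by simp
qed

lemma eigs_desc_dg: assumes U: "unitary n U" and A: "A = U * dg n d * mat_adjoint U"
  shows "eigs_desc A = rev (sort (map d [0..<n]))"
proof -
  have "image_mset Re (proots (char_poly A)) = mset (map d [0..<n])"
    unfolding char_poly_dg[OF U A] proots_lin_prod by (simp add: multiset.map_comp o_def)
  then show ?thesis unfolding eigs_desc_def by (simp only: sorted_list_of_multiset_mset)
qed

lemma roots_dg: assumes U: "unitary n U" and A: "A = U * dg n d * mat_adjoint U"
  and r: "poly (char_poly A) \<mu> = 0"
  shows "\<exists>i<n. \<mu> = complex_of_real (d i)"
proof -
  have pp: "poly (\<Prod>a\<leftarrow>cs. [:- a, 1:]) \<mu> = (\<Prod>a\<leftarrow>cs. \<mu> - a)" for cs :: "complex list"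
    by (induction cs) (auto simp: algebra_simps)
  have "(\<Prod>a\<leftarrow>map (\<lambda>i. complex_of_real (d i)) [0..<n]. \<mu> - a) = 0"
    using r unfolding char_poly_dg[OF U A] pp .
  then show ?thesis unfolding prod_list_zero_iff by auto
qed

lemma count_desc: fixes xs :: "real list" assumes j: "j < length xs"
  shows "j < card {i. i < length xs \<and> rev (sort xs) ! j \<le> xs ! i}"
    "length xs - j \<le> card {i. i < length xs \<and> xs ! i \<le> rev (sort xs) ! j}"
proof -
  define L where "L = rev (sort xs)"
  define n where "n = length xs"
  have lL: "length L = n" unfolding L_def n_def by simp
  have mono: "L ! b \<le> L ! a" if "a \<le> b" "b < n" for a b
  proof -
    have "L ! a = sort xs ! (n - Suc a)" "L ! b = sort xs ! (n - Suc b)"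
      using that unfolding L_def n_def by (auto simp: rev_nth)
    moreover have "sort xs ! (n - Suc b) \<le> sort xs ! (n - Suc a)"
      by (rule sorted_nth_mono) (use that in \<open>auto simp: n_def\<close>)
    ultimately show ?thesis by simp
  qed
  have cnt: "card {i. i < n \<and> P (xs ! i)} = card {i. i < n \<and> P (L ! i)}" for P
  proof -
    have "card {i. i < n \<and> P (xs ! i)} = length (filter P xs)" unfolding n_def by (simp add: length_filter_conv_card)
    also have "\<dots> = size (filter_mset P (mset xs))" by (metis mset_filter size_mset)
    also have "\<dots> = size (filter_mset P (mset L))" unfolding L_def by simp
    also have "\<dots> = length (filter P L)" by (metis mset_filter size_mset)
    also have "\<dots> = card {i. i < n \<and> P (L ! i)}" using lL by (simp add: length_filter_conv_card)
    finally show ?thesis .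
  qed
  have jn: "j < n" using j unfolding n_def .
  have "{0..j} \<subseteq> {i. i < n \<and> L ! j \<le> L ! i}" using mono jn by auto
  then have "card {0..j} \<le> card {i. i < n \<and> L ! j \<le> L ! i}" by (intro card_mono) auto
  then show "j < card {i. i < length xs \<and> rev (sort xs) ! j \<le> xs ! i}"
    using cnt[of "\<lambda>x. L ! j \<le> x"] unfolding L_def n_def by simp
  have "{j..<n} \<subseteq> {i. i < n \<and> L ! i \<le> L ! j}" using mono jn by auto
  then have "card {j..<n} \<le> card {i. i < n \<and> L ! i \<le> L ! j}" by (intro card_mono) auto
  then show "length xs - j \<le> card {i. i < length xs \<and> xs ! i \<le> rev (sort xs) ! j}"
    using cnt[of "\<lambda>x. x \<le> L ! j"] unfolding L_def n_def by simp
qed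

lemma dg_vec: assumes x: "x \<in> carrier_vec n" and i: "i < n"
  shows "(dg n d *\<^sub>v x) $ i = complex_of_real (d i) * x $ i"
proof -
  have "(dg n d *\<^sub>v x) $ i = (\<Sum>l<n. dg n d $$ (i,l) * x $ l)" by (rule mult_vec_index_sum[OF dg_carrier x i])
  also have "\<dots> = (\<Sum>l<n. if l = i then complex_of_real (d i) * x $ l else 0)"
    using i by (intro sum.cong) auto
  also have "\<dots> = complex_of_real (d i) * x $ i" using sum.delta[OF finite_lessThan[of n], of i] i by simp
  finally show ?thesis .
qed

lemma quad_dg: assumes U: "unitary n U" and A: "A = U * dg n d * mat_adjoint U" and v: "v \<in> carrier_vec n"
  shows "(A *\<^sub>v v) \<bullet>c v = complex_of_real (\<Sum>i<n. d i * (cmod ((mat_adjoint U *\<^sub>v v) $ i))^2)"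
    "(\<Sum>i<n. (cmod ((mat_adjoint U *\<^sub>v v) $ i))^2) = (\<Sum>i<n. (cmod (v $ i))^2)"
proof -
  have Uc: "U \<in> carrier_mat n n" using U unfolding unitary_def by auto
  have Ua: "mat_adjoint U \<in> carrier_mat n n" using Uc by simp
  define x where "x = mat_adjoint U *\<^sub>v v"
  have x: "x \<in> carrier_vec n" unfolding x_def using Ua v by (rule mult_mat_vec_carrier)
  have dx: "dg n d *\<^sub>v x \<in> carrier_vec n" using dg_carrier x by (rule mult_mat_vec_carrier)
  have "A *\<^sub>v v = U *\<^sub>v (dg n d *\<^sub>v x)" unfolding A x_def by (rule mat3_vec[OF Uc dg_carrier Ua v])
  then have "(A *\<^sub>v v) \<bullet>c v = (dg n d *\<^sub>v x) \<bullet>c x"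
    using adj_inner[OF Uc dx v] unfolding x_def by simp
  also have "\<dots> = (\<Sum>i<n. (dg n d *\<^sub>v x) $ i * cnj (x $ i))" by (rule cscalar_sum[OF dx x])
  also have "\<dots> = (\<Sum>i<n. complex_of_real (d i * (cmod (x $ i))^2))"
    by (intro sum.cong) (auto simp: dg_vec[OF x] cnj_mult_self mult.assoc simp del: index_mult_mat_vec)
  finally show "(A *\<^sub>v v) \<bullet>c v = complex_of_real (\<Sum>i<n. d i * (cmod ((mat_adjoint U *\<^sub>v v) $ i))^2)"
    unfolding x_def by simp
  have "complex_of_real (\<Sum>i<n. (cmod (x $ i))^2) = x \<bullet>c x" by (rule cscalar_self[OF x, symmetric])
  also have "\<dots> = v \<bullet>c (mat_adjoint (mat_adjoint U) *\<^sub>v x)" using adj_inner[OF Ua v x] by (simp only: x_def[symmetric])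
  also have "mat_adjoint (mat_adjoint U) *\<^sub>v x = v" unfolding x_def adj_adj by (rule unitary_vec(1)[OF U v])
  also have "v \<bullet>c v = complex_of_real (\<Sum>i<n. (cmod (v $ i))^2)" by (rule cscalar_self[OF v])
  finally show "(\<Sum>i<n. (cmod ((mat_adjoint U *\<^sub>v v) $ i))^2) = (\<Sum>i<n. (cmod (v $ i))^2)"
    unfolding x_def by (simp only: of_real_eq_iff)
qed

lemma vec_nonzero_norm: assumes w: "(w::complex vec) \<in> carrier_vec n" "w \<noteq> 0\<^sub>v n"
  shows "(\<Sum>i<n. (cmod (w $ i))^2) > 0"
proof -
  have "\<exists>p<n. w $ p \<noteq> 0"
  proof (rule ccontr)
    assume "\<not> (\<exists>p<n. w $ p \<noteq> 0)"
    then have "w = 0\<^sub>v n" using w(1) by (intro eq_vecI) auto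
    then show False using w(2) by simp
  qed
  then obtain p where p: "p < n" "w $ p \<noteq> 0" by blast
  show ?thesis by (rule sum_pos2[of _ p]) (use p in auto)
qed

lemma det_zero_row: assumes E: "(E::complex mat) \<in> carrier_mat n n" and r: "r < n"
  and z: "\<And>s. s < n \<Longrightarrow> E $$ (r,s) = 0"
  shows "det E = 0"
proof -
  have "\<And>p. p permutes {0..<n} \<Longrightarrow> (\<Prod>i = 0..<n. E $$ (i, p i)) = 0"
  proof -
    fix p assume p: "p permutes {0..<n}"
    have "p r < n" using p r by (simp add: permutes_in_image)
    then have "E $$ (r, p r) = 0" by (rule z)
    then show "(\<Prod>i = 0..<n. E $$ (i, p i)) = 0" using r by (intro prod_zero) auto
  qed
  then show ?thesis unfolding det_def'[OF E] by (intro sum.neutral) simp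
qed

lemma underdetermined: assumes rs: "set rs \<subseteq> carrier_vec n" and len: "length rs < n"
  shows "\<exists>w. w \<in> carrier_vec n \<and> w \<noteq> 0\<^sub>v n \<and> (\<forall>\<rho>\<in>set rs. \<rho> \<bullet> w = (0::complex))"
proof -
  define E where "E = mat n n (\<lambda>(r,s). if r < length rs then rs ! r $ s else (0::complex))"
  have Ec: "E \<in> carrier_mat n n" unfolding E_def by (rule mat_carrier)
  have "det E = 0"
    by (rule det_zero_row[OF Ec, of "n - 1"]) (use len in \<open>auto simp: E_def\<close>)
  then obtain w where w: "w \<in> carrier_vec n" "w \<noteq> 0\<^sub>v n" "E *\<^sub>v w = 0\<^sub>v n"
    using det_0_iff_vec_prod_zero_field[OF Ec] by blast
  have "\<rho> \<bullet> w = 0" if "\<rho> \<in> set rs" for \<rho>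
  proof -
    obtain r where r: "r < length rs" "\<rho> = rs ! r" using \<open>\<rho> \<in> set rs\<close> by (metis in_set_conv_nth)
    have rn: "r < n" using r len by simp
    have \<rho>c: "\<rho> \<in> carrier_vec n" using rs that by auto
    have "0 = (E *\<^sub>v w) $ r" using w(3) rn by simp
    also have "\<dots> = (\<Sum>s<n. E $$ (r,s) * w $ s)" by (rule mult_vec_index_sum[OF Ec w(1) rn])
    also have "\<dots> = (\<Sum>s<n. \<rho> $ s * w $ s)" using r rn by (intro sum.cong) (auto simp: E_def)
    also have "\<dots> = \<rho> \<bullet> w" using w(1) unfolding scalar_prod_def by (simp add: atLeast0LessThan)
    finally show ?thesis by simp
  qed
  then show ?thesis using w by blast
qed

lemma set_map_upt: "{i. i < n \<and> P (map f [0..<n] ! i)} = {i. i < n \<and> P (f i)}"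
  by auto

lemma len_filter_upt: "length (filter P [0..<n]) = card {i. i < n \<and> P i}"
  unfolding length_filter_conv_card by (rule arg_cong[where f=card]) auto

lemma weyl_half:
  assumes A: "hermitian_mat n A" and B: "hermitian_mat n B" and j: "j < n"
    and le: "\<And>v. v \<in> carrier_vec n \<Longrightarrow> Re ((A *\<^sub>v v) \<bullet>c v) \<le> Re ((B *\<^sub>v v) \<bullet>c v) + c * (\<Sum>i<n. (cmod (v $ i))^2)"
  shows "eigs_desc A ! j \<le> eigs_desc B ! j + c"
proof -
  obtain U a where U: "unitary n U" and Ad: "A = U * dg n a * mat_adjoint U" using spectral[OF A] by blast
  obtain V b where V: "unitary n V" and Bd: "B = V * dg n b * mat_adjoint V" using spectral[OF B] by blast
  have Uc: "U \<in> carrier_mat n n" using U unfolding unitary_def by auto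
  have Ua: "mat_adjoint U \<in> carrier_mat n n" using Uc by simp
  have Vc: "V \<in> carrier_mat n n" using V unfolding unitary_def by auto
  have Va: "mat_adjoint V \<in> carrier_mat n n" using Vc by simp
  define la where "la = eigs_desc A ! j"
  define mu where "mu = eigs_desc B ! j"
  have la: "la = rev (sort (map a [0..<n])) ! j" unfolding la_def eigs_desc_dg[OF U Ad] ..
  have mu: "mu = rev (sort (map b [0..<n])) ! j" unfolding mu_def eigs_desc_dg[OF V Bd] ..
  have cI0: "j < card {i. i < length (map a [0..<n]) \<and> la \<le> map a [0..<n] ! i}"
    using count_desc(1)[of j "map a [0..<n]"] j unfolding la by simp
  have "{i. i < length (map a [0..<n]) \<and> la \<le> map a [0..<n] ! i} = {i. i < n \<and> la \<le> a i}" by auto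
  then have cI: "j < card {i. i < n \<and> la \<le> a i}" using cI0 by simp
  have cJ0: "length (map b [0..<n]) - j \<le> card {i. i < length (map b [0..<n]) \<and> map b [0..<n] ! i \<le> mu}"
    using count_desc(2)[of j "map b [0..<n]"] j unfolding mu by simp
  have "{i. i < length (map b [0..<n]) \<and> map b [0..<n] ! i \<le> mu} = {i. i < n \<and> b i \<le> mu}" by auto
  then have cJ: "n - j \<le> card {i. i < n \<and> b i \<le> mu}" using cJ0 by simp
  define rs1 where "rs1 = map (row (mat_adjoint U)) (filter (\<lambda>i. \<not> la \<le> a i) [0..<n])"
  define rs2 where "rs2 = map (row (mat_adjoint V)) (filter (\<lambda>i. \<not> b i \<le> mu) [0..<n])"
  have l1: "length rs1 + card {i. i < n \<and> la \<le> a i} = n"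
    unfolding rs1_def length_map len_filter_upt[symmetric] using sum_length_filter_compl[of "\<lambda>i. la \<le> a i" "[0..<n]"] by simp
  have l2: "length rs2 + card {i. i < n \<and> b i \<le> mu} = n"
    unfolding rs2_def length_map len_filter_upt[symmetric] using sum_length_filter_compl[of "\<lambda>i. b i \<le> mu" "[0..<n]"] by simp
  have len: "length (rs1 @ rs2) < n" using l1 l2 cI cJ by simp
  have rsc: "set (rs1 @ rs2) \<subseteq> carrier_vec n" unfolding rs1_def rs2_def using Ua Va by auto
  obtain w where w: "w \<in> carrier_vec n" "w \<noteq> 0\<^sub>v n" and ortho: "\<forall>\<rho>\<in>set (rs1 @ rs2). \<rho> \<bullet> w = 0"
    using underdetermined[OF rsc len] by blast
  define x where "x = mat_adjoint U *\<^sub>v w"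
  define y where "y = mat_adjoint V *\<^sub>v w"
  have x0: "x $ i = 0" if "i < n" "\<not> la \<le> a i" for i
  proof -
    have "row (mat_adjoint U) i \<in> set rs1" unfolding rs1_def using that by auto
    then have "row (mat_adjoint U) i \<bullet> w = 0" using ortho by auto
    moreover have "i < dim_row (mat_adjoint U)" using that Uc by simp
    ultimately show ?thesis unfolding x_def by simp
  qed
  have y0: "y $ i = 0" if "i < n" "\<not> b i \<le> mu" for i
  proof -
    have "row (mat_adjoint V) i \<in> set rs2" unfolding rs2_def using that by auto
    then have "row (mat_adjoint V) i \<bullet> w = 0" using ortho by auto
    moreover have "i < dim_row (mat_adjoint V)" using that Vc by simp
    ultimately show ?thesis unfolding y_def by simp
  qed
  define N where "N = (\<Sum>i<n. (cmod (w $ i))^2)"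
  have Npos: "N > 0" unfolding N_def by (rule vec_nonzero_norm[OF w])
  have "la * N = (\<Sum>i<n. la * (cmod (x $ i))^2)"
    unfolding N_def x_def quad_dg(2)[OF U Ad w(1), symmetric] by (simp add: sum_distrib_left)
  also have "\<dots> \<le> (\<Sum>i<n. a i * (cmod (x $ i))^2)"
  proof (rule sum_mono)
    fix i assume "i \<in> {..<n}"
    then show "la * (cmod (x $ i))^2 \<le> a i * (cmod (x $ i))^2"
      using x0[of i] by (cases "la \<le> a i") (auto intro: mult_right_mono)
  qed
  also have "\<dots> = Re ((A *\<^sub>v w) \<bullet>c w)" unfolding quad_dg(1)[OF U Ad w(1)] x_def by simp
  also have "\<dots> \<le> Re ((B *\<^sub>v w) \<bullet>c w) + c * N" unfolding N_def by (rule le[OF w(1)])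
  also have "Re ((B *\<^sub>v w) \<bullet>c w) = (\<Sum>i<n. b i * (cmod (y $ i))^2)" unfolding quad_dg(1)[OF V Bd w(1)] y_def by simp
  also have "\<dots> \<le> (\<Sum>i<n. mu * (cmod (y $ i))^2)"
  proof (rule sum_mono)
    fix i assume "i \<in> {..<n}"
    then show "b i * (cmod (y $ i))^2 \<le> mu * (cmod (y $ i))^2"
      using y0[of i] by (cases "b i \<le> mu") (auto intro: mult_right_mono)
  qed
  also have "\<dots> = mu * N"
    unfolding N_def y_def quad_dg(2)[OF V Bd w(1), symmetric] by (simp add: sum_distrib_left)
  finally have "la * N \<le> (mu + c) * N" by (simp add: algebra_simps)
  then have "la \<le> mu + c" using Npos by simp
  then show ?thesis unfolding la_def mu_def .
qed

lemma poly_lin_prod: "poly (\<Prod>a\<leftarrow>cs. [:- a, 1:]) \<mu> = (\<Prod>a\<leftarrow>cs. \<mu> - a)" for cs :: "complex list"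
  by (induction cs) (auto simp: algebra_simps)

lemma herm_eig_bound:
  assumes H: "hermitian_mat n H" and bd: "\<And>\<mu>. poly (char_poly H) \<mu> = 0 \<Longrightarrow> cmod \<mu> \<le> c"
    and v: "v \<in> carrier_vec n"
  shows "\<bar>Re ((H *\<^sub>v v) \<bullet>c v)\<bar> \<le> c * (\<Sum>i<n. (cmod (v $ i))^2)"
proof -
  obtain U h where U: "unitary n U" and Hd: "H = U * dg n h * mat_adjoint U" using spectral[OF H] by blast
  have hb: "\<bar>h i\<bar> \<le> c" if i: "i < n" for i
  proof -
    have "poly (char_poly H) (complex_of_real (h i)) = 0"
      unfolding char_poly_dg[OF U Hd] poly_lin_prod prod_list_zero_iff using i by auto
    then have "cmod (complex_of_real (h i)) \<le> c" by (rule bd)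
    then show ?thesis by simp
  qed
  define X where "X i = (cmod ((mat_adjoint U *\<^sub>v v) $ i))^2" for i
  have "Re ((H *\<^sub>v v) \<bullet>c v) = (\<Sum>i<n. h i * X i)" unfolding quad_dg(1)[OF U Hd v] X_def by simp
  moreover have "(\<Sum>i<n. h i * X i) \<le> (\<Sum>i<n. c * X i)"
  proof (rule sum_mono)
    fix i assume "i \<in> {..<n}"
    then have "h i \<le> c" using hb[of i] by simp
    then show "h i * X i \<le> c * X i" unfolding X_def by (rule mult_right_mono) simp
  qed
  moreover have "(\<Sum>i<n. - c * X i) \<le> (\<Sum>i<n. h i * X i)"
  proof (rule sum_mono)
    fix i assume "i \<in> {..<n}"
    then have "- c \<le> h i" using hb[of i] by simp
    then show "- c * X i \<le> h i * X i" unfolding X_def by (rule mult_right_mono) simp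
  qed
  moreover have "(\<Sum>i<n. X i) = (\<Sum>i<n. (cmod (v $ i))^2)" unfolding X_def by (rule quad_dg(2)[OF U Hd v])
  ultimately show ?thesis by (simp add: sum_distrib_left[symmetric] sum_negf)
qed

lemma herm_minus: assumes "hermitian_mat n A" "hermitian_mat n B" shows "hermitian_mat n (A - B)"
  using assms unfolding hermitian_mat_def by (auto simp: adj_minus[of _ n n])

lemma weyl:
  assumes A: "hermitian_mat n A" and B: "hermitian_mat n B" and j: "j < n"
    and bd: "\<And>\<mu>. poly (char_poly (A - B)) \<mu> = 0 \<Longrightarrow> cmod \<mu> \<le> c"
  shows "\<bar>eigs_desc A ! j - eigs_desc B ! j\<bar> \<le> c"
proof -
  have Ac: "A \<in> carrier_mat n n" and Bc: "B \<in> carrier_mat n n" using A B unfolding hermitian_mat_def by auto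
  have key: "\<bar>Re ((A *\<^sub>v v) \<bullet>c v) - Re ((B *\<^sub>v v) \<bullet>c v)\<bar> \<le> c * (\<Sum>i<n. (cmod (v $ i))^2)"
    if v: "v \<in> carrier_vec n" for v
  proof -
    have "(A - B) *\<^sub>v v = A *\<^sub>v v - B *\<^sub>v v" by (rule minus_mult_distrib_mat_vec[OF Ac Bc v])
    moreover have "(A *\<^sub>v v - B *\<^sub>v v) \<bullet>c v = (A *\<^sub>v v) \<bullet>c v - (B *\<^sub>v v) \<bullet>c v"
      by (rule minus_scalar_prod_distrib[of _ n]) (use Ac Bc v in auto)
    ultimately have "Re (((A - B) *\<^sub>v v) \<bullet>c v) = Re ((A *\<^sub>v v) \<bullet>c v) - Re ((B *\<^sub>v v) \<bullet>c v)" by simp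
    then show ?thesis using herm_eig_bound[OF herm_minus[OF A B] bd v] by simp
  qed
  have 1: "eigs_desc A ! j \<le> eigs_desc B ! j + c"
    by (rule weyl_half[OF A B j]) (use key in fastforce)
  have 2: "eigs_desc B ! j \<le> eigs_desc A ! j + c"
    by (rule weyl_half[OF B A j]) (use key in fastforce)
  show ?thesis using 1 2 by simp
qed

lemma cs_real:
  fixes a :: "'a \<Rightarrow> 'b::linordered_field"
  shows "(\<Sum>i\<in>I. a i * b i)\<^sup>2 \<le> (\<Sum>i\<in>I. (a i)\<^sup>2) * (\<Sum>i\<in>I. (b i)\<^sup>2)"
proof (cases "(\<Sum>i\<in>I. (b i)\<^sup>2) > 0")
  case False
  then consider "\<And>i. i\<in>I \<Longrightarrow> b i = 0" | "infinite I"
    by (metis (mono_tags, lifting) sum_pos2 zero_le_power2 zero_less_power2)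
  thus ?thesis
    by fastforce
next
  case True
  define r where "r \<equiv> (\<Sum>i\<in>I. a i * b i) / (\<Sum>i\<in>I. (b i)\<^sup>2)"
  have "0 \<le> (\<Sum>i\<in>I. (a i - r * b i)\<^sup>2)"
    by (simp add: sum_nonneg)
  also have "... = (\<Sum>i\<in>I. (a i)\<^sup>2 - 2 * r * (a i * b i) + r\<^sup>2 * (b i)\<^sup>2)"
    by (intro sum.cong refl) (simp add: power2_eq_square algebra_simps)
  also have "... = (\<Sum>i\<in>I. (a i)\<^sup>2) - 2 * r * (\<Sum>i\<in>I. a i * b i) + r\<^sup>2 * (\<Sum>i\<in>I. (b i)\<^sup>2)"
    unfolding sum.distrib sum_subtractf sum_distrib_left[symmetric] ..
  also have "\<dots> = (\<Sum>i\<in>I. (a i)\<^sup>2) - ((\<Sum>i\<in>I. a i * b i))\<^sup>2 / (\<Sum>i\<in>I. (b i)\<^sup>2)"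
    by (simp add: r_def power2_eq_square)
  finally have "0 \<le> (\<Sum>i\<in>I. (a i)\<^sup>2) - ((\<Sum>i\<in>I. a i * b i))\<^sup>2 / (\<Sum>i\<in>I. (b i)\<^sup>2)" .
  hence "((\<Sum>i\<in>I. a i * b i))\<^sup>2 / (\<Sum>i\<in>I. (b i)\<^sup>2) \<le> (\<Sum>i\<in>I. (a i)\<^sup>2)"
    by (simp add: le_diff_eq)
  thus "((\<Sum>i\<in>I. a i * b i))\<^sup>2 \<le> (\<Sum>i\<in>I. (a i)\<^sup>2) * (\<Sum>i\<in>I. (b i)\<^sup>2)"
    by (simp add: pos_divide_le_eq True)
qed

lemma cs_real_sqrt:
  fixes a b :: "nat \<Rightarrow> real"
  assumes "\<And>i. a i \<ge> 0" "\<And>i. b i \<ge> 0"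
  shows "(\<Sum>i\<in>I. a i * b i) \<le> sqrt (\<Sum>i\<in>I. (a i)\<^sup>2) * sqrt (\<Sum>i\<in>I. (b i)\<^sup>2)"
proof -
  have nn: "0 \<le> (\<Sum>i\<in>I. a i * b i)" using assms by (simp add: sum_nonneg)
  have "(\<Sum>i\<in>I. a i * b i) = sqrt ((\<Sum>i\<in>I. a i * b i)\<^sup>2)" using nn by simp
  also have "\<dots> \<le> sqrt ((\<Sum>i\<in>I. (a i)\<^sup>2) * (\<Sum>i\<in>I. (b i)\<^sup>2))" using cs_real by (rule real_sqrt_le_mono)
  also have "\<dots> = sqrt (\<Sum>i\<in>I. (a i)\<^sup>2) * sqrt (\<Sum>i\<in>I. (b i)\<^sup>2)" by (rule real_sqrt_mult)
  finally show ?thesis .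
qed

lemma vnorm_nonneg[simp]: "0 \<le> vnorm v" unfolding vnorm_def by (simp add: sum_nonneg)

lemma vnorm_sq: "(vnorm v)^2 = (\<Sum>i<dim_vec v. (cmod (v $ i))^2)"
  unfolding vnorm_def by (simp add: sum_nonneg)

lemma vnorm_carrier: "v \<in> carrier_vec n \<Longrightarrow> vnorm v = sqrt (\<Sum>i<n. (cmod (v $ i))^2)"
  unfolding vnorm_def by (simp add: carrier_vecD)

lemma vnorm_smult: "vnorm (a \<cdot>\<^sub>v v) = cmod a * vnorm v"
proof -
  have "vnorm (a \<cdot>\<^sub>v v) = sqrt (\<Sum>i<dim_vec v. (cmod a)^2 * (cmod (v $ i))^2)"
    unfolding vnorm_def by (simp add: norm_mult power_mult_distrib)
  also have "\<dots> = sqrt ((cmod a)^2 * (\<Sum>i<dim_vec v. (cmod (v $ i))^2))" by (simp add: sum_distrib_left)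
  also have "\<dots> = cmod a * vnorm v" unfolding vnorm_def by (simp add: real_sqrt_mult)
  finally show ?thesis .
qed

lemma vnorm_comp: "i < dim_vec v \<Longrightarrow> cmod (v $ i) \<le> vnorm v"
proof -
  assume i: "i < dim_vec v"
  have "(cmod (v $ i))^2 \<le> (\<Sum>j<dim_vec v. (cmod (v $ j))^2)"
    using i by (intro member_le_sum) auto
  then have "sqrt ((cmod (v $ i))^2) \<le> vnorm v" unfolding vnorm_def by (rule real_sqrt_le_mono)
  then show ?thesis by simp
qed

lemma cinner_bound: assumes v: "(v::complex vec) \<in> carrier_vec n" and w: "w \<in> carrier_vec n"
  shows "cmod (v \<bullet>c w) \<le> vnorm v * vnorm w"
proof -
  have "cmod (v \<bullet>c w) = cmod (\<Sum>i<n. v $ i * cnj (w $ i))" using cscalar_sum[OF v w] by simp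
  also have "\<dots> \<le> (\<Sum>i<n. cmod (v $ i) * cmod (w $ i))"
    by (rule order_trans[OF norm_sum]) (simp add: norm_mult)
  also have "\<dots> \<le> sqrt (\<Sum>i<n. (cmod (v $ i))^2) * sqrt (\<Sum>i<n. (cmod (w $ i))^2)"
    by (rule cs_real_sqrt) auto
  also have "\<dots> = vnorm v * vnorm w" using vnorm_carrier[OF v] vnorm_carrier[OF w] by simp
  finally show ?thesis .
qed

lemma vnorm_add: assumes v: "(v::complex vec) \<in> carrier_vec n" and w: "w \<in> carrier_vec n"
  shows "vnorm (v + w) \<le> vnorm v + vnorm w"
proof -
  have "(vnorm (v + w))^2 = (\<Sum>i<n. (cmod (v $ i + w $ i))^2)"
    unfolding vnorm_sq using v w by simp
  also have "\<dots> \<le> (\<Sum>i<n. (cmod (v $ i) + cmod (w $ i))^2)"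
    by (intro sum_mono power_mono norm_triangle_ineq) auto
  also have "\<dots> = (\<Sum>i<n. (cmod (v $ i))^2) + 2 * (\<Sum>i<n. cmod (v $ i) * cmod (w $ i)) + (\<Sum>i<n. (cmod (w $ i))^2)"
    by (simp add: power2_sum sum.distrib sum_distrib_left mult.assoc)
  also have "\<dots> \<le> (vnorm v)^2 + 2 * (vnorm v * vnorm w) + (vnorm w)^2"
  proof -
    have "(\<Sum>i<n. cmod (v $ i) * cmod (w $ i)) \<le> sqrt (\<Sum>i<n. (cmod (v $ i))^2) * sqrt (\<Sum>i<n. (cmod (w $ i))^2)"
      by (rule cs_real_sqrt) auto
    then show ?thesis using vnorm_carrier[OF v] vnorm_carrier[OF w] v w unfolding vnorm_sq by simp
  qed
  also have "\<dots> = (vnorm v + vnorm w)^2" by (simp add: power2_sum)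
  finally show ?thesis by (rule power2_le_imp_le) simp
qed

lemma vnorm_zero: assumes v: "(v::complex vec) \<in> carrier_vec n" and z: "vnorm v = 0" shows "v = 0\<^sub>v n"
proof (rule eq_vecI)
  fix i assume "i < dim_vec (0\<^sub>v n :: complex vec)"
  then have i: "i < dim_vec v" using v by simp
  have "cmod (v $ i) \<le> 0" using vnorm_comp[OF i] z by simp
  then show "v $ i = 0\<^sub>v n $ i" using i v by simp
qed (use v in simp)

lemma sqrt_sum_le_sum: fixes x :: "nat \<Rightarrow> real" assumes "\<And>i. x i \<ge> 0"
  shows "sqrt (\<Sum>i<n. (x i)^2) \<le> (\<Sum>i<n. x i)"
proof -
  have S: "0 \<le> (\<Sum>i<n. x i)" using assms by (simp add: sum_nonneg)
  have "(\<Sum>i<n. (x i)^2) \<le> (\<Sum>i<n. x i * (\<Sum>j<n. x j))"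
  proof (rule sum_mono)
    fix i assume "i \<in> {..<n}"
    then have "x i \<le> (\<Sum>j<n. x j)" using assms by (intro member_le_sum) auto
    then show "(x i)^2 \<le> x i * (\<Sum>j<n. x j)" using assms[of i] by (simp add: power2_eq_square mult_left_mono)
  qed
  also have "\<dots> = (\<Sum>i<n. x i)^2" by (simp add: sum_distrib_right power2_eq_square)
  finally have "sqrt (\<Sum>i<n. (x i)^2) \<le> sqrt ((\<Sum>i<n. x i)^2)" by (rule real_sqrt_le_mono)
  then show ?thesis using S by simp
qed

definition matK :: "nat \<Rightarrow> nat \<Rightarrow> complex mat \<Rightarrow> real" where
  "matK n m A = (\<Sum>i<n. \<Sum>l<m. cmod (A $$ (i,l)))"

lemma mat_vnorm_bound: assumes A: "A \<in> carrier_mat n m" and v: "v \<in> carrier_vec m"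
  shows "vnorm (A *\<^sub>v v) \<le> matK n m A * vnorm v"
proof -
  have Av: "A *\<^sub>v v \<in> carrier_vec n" using A v by (rule mult_mat_vec_carrier)
  have ci: "cmod ((A *\<^sub>v v) $ i) \<le> (\<Sum>l<m. cmod (A $$ (i,l))) * vnorm v" if i: "i < n" for i
  proof -
    have "cmod ((A *\<^sub>v v) $ i) = cmod (\<Sum>l<m. A $$ (i,l) * v $ l)" using mult_vec_index_sum[OF A v i] by simp
    also have "\<dots> \<le> (\<Sum>l<m. cmod (A $$ (i,l)) * cmod (v $ l))"
      by (rule order_trans[OF norm_sum]) (simp add: norm_mult)
    also have "\<dots> \<le> (\<Sum>l<m. cmod (A $$ (i,l)) * vnorm v)"
      by (intro sum_mono mult_left_mono vnorm_comp) (use v in auto)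
    finally show ?thesis by (simp add: sum_distrib_right)
  qed
  have "vnorm (A *\<^sub>v v) = sqrt (\<Sum>i<n. (cmod ((A *\<^sub>v v) $ i))^2)" by (rule vnorm_carrier[OF Av])
  also have "\<dots> \<le> (\<Sum>i<n. cmod ((A *\<^sub>v v) $ i))" by (rule sqrt_sum_le_sum) simp
  also have "\<dots> \<le> (\<Sum>i<n. (\<Sum>l<m. cmod (A $$ (i,l))) * vnorm v)" by (intro sum_mono ci) simp
  also have "\<dots> = matK n m A * vnorm v" unfolding matK_def by (simp add: sum_distrib_right)
  finally show ?thesis .
qed

lemma opnorm_set_bdd: assumes A: "A \<in> carrier_mat n m"
  shows "bdd_above {vnorm (A *\<^sub>v v) | v. v \<in> carrier_vec (dim_col A) \<and> vnorm v \<le> 1}"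
proof (rule bdd_aboveI)
  fix x assume "x \<in> {vnorm (A *\<^sub>v v) | v. v \<in> carrier_vec (dim_col A) \<and> vnorm v \<le> 1}"
  then obtain v where v: "v \<in> carrier_vec m" "vnorm v \<le> 1" "x = vnorm (A *\<^sub>v v)" using A by auto
  have K: "0 \<le> matK n m A" unfolding matK_def by (simp add: sum_nonneg)
  have "x \<le> matK n m A * vnorm v" using mat_vnorm_bound[OF A v(1)] v(3) by simp
  also have "\<dots> \<le> matK n m A" using K v(2) by (simp add: mult_left_le)
  finally show "x \<le> matK n m A" .
qed

lemma opnorm_ge: assumes A: "A \<in> carrier_mat n m" and v: "v \<in> carrier_vec m"
  shows "vnorm (A *\<^sub>v v) \<le> opnorm A * vnorm v"
proof (cases "vnorm v = 0")
  case True
  have "vnorm (A *\<^sub>v v) \<le> matK n m A * vnorm v" by (rule mat_vnorm_bound[OF A v])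
  then have "vnorm (A *\<^sub>v v) \<le> 0" using True by simp
  then show ?thesis using True by simp
next
  case False
  then have pos: "vnorm v > 0" using vnorm_nonneg[of v] by linarith
  define u where "u = complex_of_real (1 / vnorm v) \<cdot>\<^sub>v v"
  have u: "u \<in> carrier_vec m" unfolding u_def using v by simp
  have nu: "vnorm u = 1" unfolding u_def vnorm_smult using pos by (simp add: norm_divide)
  have Au: "A *\<^sub>v u = complex_of_real (1 / vnorm v) \<cdot>\<^sub>v (A *\<^sub>v v)" unfolding u_def by (rule mult_mat_vec[OF A v])
  have "vnorm (A *\<^sub>v u) \<in> {vnorm (A *\<^sub>v v) | v. v \<in> carrier_vec (dim_col A) \<and> vnorm v \<le> 1}"
    using u nu A by auto
  then have "vnorm (A *\<^sub>v u) \<le> opnorm A" unfolding opnorm_def by (rule cSup_upper[OF _ opnorm_set_bdd[OF A]])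
  then have "vnorm (A *\<^sub>v v) / vnorm v \<le> opnorm A" unfolding Au vnorm_smult using pos by (simp add: norm_divide)
  then show ?thesis using pos by (simp add: divide_le_eq mult.commute)
qed

lemma opnorm_nonneg: assumes A: "A \<in> carrier_mat n m" shows "0 \<le> opnorm A"
proof -
  have z: "0\<^sub>v m \<in> carrier_vec (dim_col A) \<and> vnorm (0\<^sub>v m :: complex vec) \<le> 1"
    using A unfolding vnorm_def by simp
  have "vnorm (A *\<^sub>v 0\<^sub>v m) \<in> {vnorm (A *\<^sub>v v) | v. v \<in> carrier_vec (dim_col A) \<and> vnorm v \<le> 1}"
    using z by blast
  then have "vnorm (A *\<^sub>v 0\<^sub>v m) \<le> opnorm A" unfolding opnorm_def by (rule cSup_upper[OF _ opnorm_set_bdd[OF A]])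
  then show ?thesis using vnorm_nonneg order_trans by blast
qed

lemma opnorm_least: assumes A: "A \<in> carrier_mat n m" and c: "0 \<le> c"
  and le: "\<And>v. v \<in> carrier_vec m \<Longrightarrow> vnorm (A *\<^sub>v v) \<le> c * vnorm v"
  shows "opnorm A \<le> c"
  unfolding opnorm_def
proof (rule cSup_least)
  have z: "0\<^sub>v m \<in> carrier_vec (dim_col A) \<and> vnorm (0\<^sub>v m :: complex vec) \<le> 1"
    using A unfolding vnorm_def by simp
  show "{vnorm (A *\<^sub>v v) | v. v \<in> carrier_vec (dim_col A) \<and> vnorm v \<le> 1} \<noteq> {}"
    using z by blast
  fix x assume "x \<in> {vnorm (A *\<^sub>v v) | v. v \<in> carrier_vec (dim_col A) \<and> vnorm v \<le> 1}"
  then obtain v where v: "v \<in> carrier_vec m" "vnorm v \<le> 1" "x = vnorm (A *\<^sub>v v)" using A by auto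
  have "x \<le> c * vnorm v" using le[OF v(1)] v(3) by simp
  also have "\<dots> \<le> c" using c v(2) by (simp add: mult_left_le)
  finally show "x \<le> c" .
qed

lemma eig_sum_bound: assumes Y: "Y \<in> carrier_mat n n" and Z: "Z \<in> carrier_mat n n"
  and r: "poly (char_poly (Y + Z)) \<mu> = 0"
  shows "cmod \<mu> \<le> opnorm Y + opnorm Z"
proof -
  have YZ: "Y + Z \<in> carrier_mat n n" using Y Z by simp
  have "eigenvalue (Y + Z) \<mu>" using r eigenvalue_root_char_poly[OF YZ] by simp
  then obtain v where v: "v \<in> carrier_vec n" "v \<noteq> 0\<^sub>v n" "(Y + Z) *\<^sub>v v = \<mu> \<cdot>\<^sub>v v"
    unfolding eigenvalue_def eigenvector_def using YZ by auto
  have "vnorm v \<noteq> 0" using vnorm_zero[OF v(1)] v(2) by blast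
  then have pos: "vnorm v > 0" using vnorm_nonneg[of v] by linarith
  have "cmod \<mu> * vnorm v = vnorm ((Y + Z) *\<^sub>v v)" using v(3) by (simp add: vnorm_smult)
  also have "(Y + Z) *\<^sub>v v = Y *\<^sub>v v + Z *\<^sub>v v" by (rule add_mult_distrib_mat_vec[OF Y Z v(1)])
  also have "vnorm (Y *\<^sub>v v + Z *\<^sub>v v) \<le> vnorm (Y *\<^sub>v v) + vnorm (Z *\<^sub>v v)"
    by (rule vnorm_add[of _ n]) (use Y Z v in auto)
  also have "\<dots> \<le> opnorm Y * vnorm v + opnorm Z * vnorm v"
    by (intro add_mono opnorm_ge[OF Y v(1)] opnorm_ge[OF Z v(1)])
  finally have "cmod \<mu> * vnorm v \<le> (opnorm Y + opnorm Z) * vnorm v" by (simp add: algebra_simps)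
  then show ?thesis using pos by simp
qed

lemma eig_bound: assumes Y: "Y \<in> carrier_mat n n" and r: "poly (char_poly Y) \<mu> = 0"
  shows "cmod \<mu> \<le> opnorm Y"
proof -
  have "cmod \<mu> \<le> opnorm Y + opnorm (0\<^sub>m n n :: complex mat)"
    by (rule eig_sum_bound[OF Y zero_carrier_mat]) (use r Y in simp)
  moreover have "opnorm (0\<^sub>m n n :: complex mat) \<le> 0"
    by (rule opnorm_least[of _ n n]) (auto simp: vnorm_def)
  ultimately show ?thesis by simp
qed

definition cv :: "complex vec \<Rightarrow> complex vec" where
  "cv v = vec (dim_vec v) (\<lambda>i. cnj (v $ i))"

lemma cv_carrier[simp]: "v \<in> carrier_vec n \<Longrightarrow> cv v \<in> carrier_vec n"
  unfolding cv_def by (simp add: carrier_vecD)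

lemma cv_index[simp]: "i < dim_vec v \<Longrightarrow> cv v $ i = cnj (v $ i)" "dim_vec (cv v) = dim_vec v"
  unfolding cv_def by auto

lemma vnorm_cv[simp]: "vnorm (cv v) = vnorm v"
  unfolding vnorm_def by simp

lemma mconj_carrier[simp]: "A \<in> carrier_mat n m \<Longrightarrow> mconj A \<in> carrier_mat n m"
  unfolding mconj_def by (metis carrier_matD carrier_matI index_map_mat(2,3))

lemma mconj_index[simp]: "i < dim_row A \<Longrightarrow> j < dim_col A \<Longrightarrow> mconj A $$ (i,j) = cnj (A $$ (i,j))"
  "dim_row (mconj A) = dim_row A" "dim_col (mconj A) = dim_col A"
  unfolding mconj_def by auto

lemma mconj_mconj[simp]: "mconj (mconj A) = A"
  by (rule eq_matI) auto

lemma mconj_vec: assumes A: "A \<in> carrier_mat n m" and v: "v \<in> carrier_vec m"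
  shows "mconj A *\<^sub>v v = cv (A *\<^sub>v cv v)"
proof (rule eq_vecI)
  fix i assume "i < dim_vec (cv (A *\<^sub>v cv v))"
  then have i: "i < n" using A by simp
  have "(mconj A *\<^sub>v v) $ i = (\<Sum>l<m. mconj A $$ (i,l) * v $ l)"
    by (rule mult_vec_index_sum[OF mconj_carrier[OF A] v i])
  also have "\<dots> = cnj (\<Sum>l<m. A $$ (i,l) * cv v $ l)" using A v i by (simp add: carrier_vecD)
  also have "(\<Sum>l<m. A $$ (i,l) * cv v $ l) = (A *\<^sub>v cv v) $ i"
    by (rule mult_vec_index_sum[OF A cv_carrier[OF v] i, symmetric])
  finally show "(mconj A *\<^sub>v v) $ i = cv (A *\<^sub>v cv v) $ i" using i A by simp
qed (use A in simp)

lemma opnorm_mconj_le: assumes A: "A \<in> carrier_mat n m" shows "opnorm (mconj A) \<le> opnorm A"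
proof (rule opnorm_least[OF mconj_carrier[OF A] opnorm_nonneg[OF A]])
  fix v :: "complex vec" assume v: "v \<in> carrier_vec m"
  have "vnorm (mconj A *\<^sub>v v) = vnorm (A *\<^sub>v cv v)" unfolding mconj_vec[OF A v] by simp
  also have "\<dots> \<le> opnorm A * vnorm (cv v)" by (rule opnorm_ge[OF A cv_carrier[OF v]])
  finally show "vnorm (mconj A *\<^sub>v v) \<le> opnorm A * vnorm v" by simp
qed

lemma opnorm_mconj: assumes A: "A \<in> carrier_mat n m" shows "opnorm (mconj A) = opnorm A"
  using opnorm_mconj_le[OF A] opnorm_mconj_le[OF mconj_carrier[OF A]] by simp

lemma opnorm_adj_le: assumes A: "A \<in> carrier_mat n m" shows "opnorm (mat_adjoint A) \<le> opnorm A"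
proof (rule opnorm_least[OF adj_carrier[OF A] opnorm_nonneg[OF A]])
  fix v :: "complex vec" assume v: "v \<in> carrier_vec n"
  define w where "w = mat_adjoint A *\<^sub>v v"
  have Aa: "mat_adjoint A \<in> carrier_mat m n" using A by simp
  have w: "w \<in> carrier_vec m" unfolding w_def using Aa v by (rule mult_mat_vec_carrier)
  have Aw: "A *\<^sub>v w \<in> carrier_vec n" using A w by (rule mult_mat_vec_carrier)
  have d: "dim_vec w = m" using w by auto
  have e: "w \<bullet>c w = complex_of_real ((vnorm w)^2)" unfolding vnorm_sq d by (rule cscalar_self[OF w])
  have "(vnorm w)^2 = cmod (w \<bullet>c w)" unfolding e by (simp add: norm_power)
  also have "w \<bullet>c w = v \<bullet>c (mat_adjoint (mat_adjoint A) *\<^sub>v w)"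
    using adj_inner[OF Aa v w] by (simp only: w_def[symmetric])
  also have "cmod (v \<bullet>c (mat_adjoint (mat_adjoint A) *\<^sub>v w)) \<le> vnorm v * vnorm (A *\<^sub>v w)"
    using cinner_bound[OF v Aw] by simp
  also have "\<dots> \<le> vnorm v * (opnorm A * vnorm w)"
    by (intro mult_left_mono opnorm_ge[OF A w]) simp
  finally have le: "(vnorm w)^2 \<le> vnorm v * (opnorm A * vnorm w)" .
  show "vnorm (mat_adjoint A *\<^sub>v v) \<le> opnorm A * vnorm v"
  proof (cases "vnorm w = 0")
    case True then show ?thesis using opnorm_nonneg[OF A] unfolding w_def by simp
  next
    case False
    then have "vnorm w > 0" using vnorm_nonneg[of w] by linarith
    then have "vnorm w \<le> opnorm A * vnorm v" using le by (simp add: power2_eq_square algebra_simps)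
    then show ?thesis unfolding w_def .
  qed
qed

lemma char_poly_comm: assumes A: "(A::complex mat) \<in> carrier_mat n n" and B: "B \<in> carrier_mat n n"
  shows "char_poly (A * B) = char_poly (B * A)"
proof -
  let ?Z = "0\<^sub>m n n :: complex mat"
  let ?I = "1\<^sub>m n :: complex mat"
  define X where "X = four_block_mat (A * B) ?Z B ?Z"
  define Y where "Y = four_block_mat ?Z ?Z B (B * A)"
  define P where "P = four_block_mat ?I A ?Z ?I"
  define Q where "Q = four_block_mat ?I (- A) ?Z ?I"
  have AB: "A * B \<in> carrier_mat n n" using A B by (rule mult_carrier_mat)
  have BA: "B * A \<in> carrier_mat n n" using B A by (rule mult_carrier_mat)
  have mA: "- A \<in> carrier_mat n n" using A by simp
  have z1[simp]: "- ?Z + ?I = ?I" by (rule eq_matI) auto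
  have z2[simp]: "?I + - ?Z = ?I" by (rule eq_matI) auto
  have z3[simp]: "- A + A = ?Z" using A by (intro eq_matI) auto
  have z4[simp]: "A + - A = ?Z" using A by (intro eq_matI) auto
  have Xc: "X \<in> carrier_mat (n + n) (n + n)" unfolding X_def using AB by simp
  have Yc: "Y \<in> carrier_mat (n + n) (n + n)" unfolding Y_def using BA by simp
  have Pc: "P \<in> carrier_mat (n + n) (n + n)" unfolding P_def by simp
  have Qc: "Q \<in> carrier_mat (n + n) (n + n)" unfolding Q_def by simp
  have PQ: "P * Q = 1\<^sub>m (n + n)"
    unfolding P_def Q_def
    by (subst mult_four_block_mat[OF one_carrier_mat A zero_carrier_mat one_carrier_mat one_carrier_mat mA zero_carrier_mat one_carrier_mat]) (use A mA in simp)
  have QP: "Q * P = 1\<^sub>m (n + n)"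
    unfolding P_def Q_def
    by (subst mult_four_block_mat[OF one_carrier_mat mA zero_carrier_mat one_carrier_mat one_carrier_mat A zero_carrier_mat one_carrier_mat]) (use A mA in simp)
  have PY: "P * Y = four_block_mat (A * B) (A * (B * A)) B (B * A)"
    unfolding P_def Y_def
    by (subst mult_four_block_mat[OF one_carrier_mat A zero_carrier_mat one_carrier_mat zero_carrier_mat zero_carrier_mat B BA]) (use A B BA in simp)
  have XP: "X * P = four_block_mat (A * B) (A * B * A) B (B * A)"
    unfolding P_def X_def
    by (subst mult_four_block_mat[OF AB zero_carrier_mat B zero_carrier_mat one_carrier_mat A zero_carrier_mat one_carrier_mat]) (use A B AB in simp)
  have "A * (B * A) = A * B * A" by (rule assoc_mult_mat[symmetric, OF A B A])
  then have PYXP: "P * Y = X * P" using PY XP by simp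
  have "X = P * Y * Q"
  proof -
    have "P * Y * Q = X * P * Q" using PYXP by simp
    also have "\<dots> = X * (P * Q)" by (rule assoc_mult_mat[OF Xc Pc Qc])
    also have "\<dots> = X" using PQ Xc by simp
    finally show ?thesis by simp
  qed
  then have "similar_mat_wit X Y P Q"
    by (intro similar_mat_witI[of _ _ "n + n"]) (use PQ QP Xc Yc Pc Qc in auto)
  have lin: "\<exists>es. char_poly M = (\<Prod>a\<leftarrow>es. [:- a, 1:])" if "M \<in> carrier_mat n n" for M :: "complex mat"
    using char_poly_factorized[OF that] by blast
  from \<open>similar_mat_wit X Y P Q\<close> have "char_poly X = char_poly Y" by (intro char_poly_similar) (auto simp: similar_mat_def)
  moreover have "char_poly X = char_poly (A * B) * char_poly ?Z"
    unfolding X_def by (rule char_poly_0_block'[OF refl lin[OF AB] lin[OF zero_carrier_mat] AB B zero_carrier_mat])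
  moreover have "char_poly Y = char_poly ?Z * char_poly (B * A)"
    unfolding Y_def by (rule char_poly_0_block'[OF refl lin[OF zero_carrier_mat] lin[OF BA] zero_carrier_mat B BA])
  moreover have "char_poly ?Z \<noteq> 0"
    using degree_monic_char_poly[of ?Z n] by auto
  ultimately show ?thesis by (simp add: mult.commute)
qed

lemma herm_mconj_transpose: assumes H: "hermitian_mat n H" shows "mconj H = transpose_mat H"
proof (rule eq_matI)
  have Hc: "H \<in> carrier_mat n n" and Ha: "mat_adjoint H = H" using H unfolding hermitian_mat_def by auto
  fix i j assume "i < dim_row (transpose_mat H)" "j < dim_col (transpose_mat H)"
  then have ij: "i < n" "j < n" using Hc by auto
  have "H $$ (j,i) = mat_adjoint H $$ (j,i)" using Ha by simp
  also have "\<dots> = cnj (H $$ (i,j))" using ij Hc by simp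
  finally show "mconj H $$ (i,j) = transpose_mat H $$ (i,j)" using ij Hc by simp
qed (use H in \<open>auto simp: hermitian_mat_def\<close>)

lemma char_poly_mconj_herm: assumes H: "hermitian_mat n H" shows "char_poly (mconj H) = char_poly H"
proof -
  have Hc: "H \<in> carrier_mat n n" using H unfolding hermitian_mat_def by simp
  show ?thesis unfolding herm_mconj_transpose[OF H] by (rule char_poly_transpose_mat[OF Hc])
qed

lemma dg_mult: "dg n a * dg n b = dg n (\<lambda>i. a i * b i)"
proof (rule eq_matI)
  fix i j assume "i < dim_row (dg n (\<lambda>i. a i * b i))" "j < dim_col (dg n (\<lambda>i. a i * b i))"
  then have ij: "i < n" "j < n" by auto
  have "(dg n a * dg n b) $$ (i,j) = (\<Sum>l<n. dg n a $$ (i,l) * dg n b $$ (l,j))"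
    by (rule mult_index_sum[OF dg_carrier dg_carrier ij])
  also have "\<dots> = (\<Sum>l<n. if l = i then (if i = j then complex_of_real (a i * b i) else 0) else 0)"
    using ij by (intro sum.cong) auto
  also have "\<dots> = dg n (\<lambda>i. a i * b i) $$ (i,j)" using sum.delta[OF finite_lessThan[of n], of i] ij by simp
  finally show "(dg n a * dg n b) $$ (i,j) = dg n (\<lambda>i. a i * b i) $$ (i,j)" .
qed auto

lemma dg_unit: "k < n \<Longrightarrow> dg n d *\<^sub>v unit_vec n k = complex_of_real (d k) \<cdot>\<^sub>v unit_vec n k"
  by (intro eq_vecI) (auto simp: dg_vec)

lemma udu_herm: assumes U: "unitary n U" shows "hermitian_mat n (U * dg n d * mat_adjoint U)"
proof -
  have Uc: "U \<in> carrier_mat n n" using U unfolding unitary_def by auto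
  have Ua: "mat_adjoint U \<in> carrier_mat n n" using Uc by simp
  have "mat_adjoint (mat_adjoint (mat_adjoint U) * dg n d * mat_adjoint U) = mat_adjoint (mat_adjoint U) * dg n d * mat_adjoint U"
    by (rule herm_conj_mat[OF dg_carrier adj_dg Ua])
  then show ?thesis unfolding hermitian_mat_def using mult3_carrier[OF Uc dg_carrier Ua] by simp
qed

lemma udu_quad: assumes U: "unitary n U" and v: "v \<in> carrier_vec n"
  shows "Re (((U * dg n d * mat_adjoint U) *\<^sub>v v) \<bullet>c v) = (\<Sum>i<n. d i * (cmod ((mat_adjoint U *\<^sub>v v) $ i))^2)"
  using quad_dg(1)[OF U refl v] by simp

lemma udu_psd: assumes U: "unitary n U" and d: "\<And>i. i < n \<Longrightarrow> 0 \<le> d i"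
  shows "psd_mat n (U * dg n d * mat_adjoint U)"
  unfolding psd_mat_def
proof (intro conjI ballI)
  show "hermitian_mat n (U * dg n d * mat_adjoint U)" by (rule udu_herm[OF U])
  fix v :: "complex vec" assume v: "v \<in> carrier_vec n"
  show "0 \<le> Re (((U * dg n d * mat_adjoint U) *\<^sub>v v) \<bullet>c v)"
    unfolding udu_quad[OF U v] by (intro sum_nonneg mult_nonneg_nonneg) (use d in auto)
qed

lemma psd_spectral: assumes A: "psd_mat n A"
  shows "\<exists>U d. unitary n U \<and> A = U * dg n d * mat_adjoint U \<and> (\<forall>i<n. 0 \<le> d i)"
proof -
  have H: "hermitian_mat n A" using A unfolding psd_mat_def by simp
  obtain U d where U: "unitary n U" and Ad: "A = U * dg n d * mat_adjoint U" using spectral[OF H] by blast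
  have Uc: "U \<in> carrier_mat n n" using U unfolding unitary_def by auto
  have "0 \<le> d k" if k: "k < n" for k
  proof -
    define u where "u = U *\<^sub>v unit_vec n k"
    have u: "u \<in> carrier_vec n" unfolding u_def using Uc by simp
    have Uu: "mat_adjoint U *\<^sub>v u = unit_vec n k" unfolding u_def by (rule unitary_vec(2)[OF U]) simp
    have "0 \<le> Re ((A *\<^sub>v u) \<bullet>c u)" using A u unfolding psd_mat_def by blast
    also have "Re ((A *\<^sub>v u) \<bullet>c u) = (\<Sum>i<n. d i * (cmod (unit_vec n k $ i))^2)"
      using udu_quad[OF U u] unfolding Ad Uu .
    also have "\<dots> = (\<Sum>i<n. if i = k then d i else 0)" using k by (intro sum.cong) auto
    also have "\<dots> = d k" using sum.delta[OF finite_lessThan[of n], of k d] k by simp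
    finally show ?thesis .
  qed
  then show ?thesis using U Ad by blast
qed

lemma udu_vec: assumes U: "unitary n U" and k: "k < n"
  shows "(U * dg n d * mat_adjoint U) *\<^sub>v (U *\<^sub>v unit_vec n k) = complex_of_real (d k) \<cdot>\<^sub>v (U *\<^sub>v unit_vec n k)"
proof -
  have Uc: "U \<in> carrier_mat n n" using U unfolding unitary_def by auto
  have Ua: "mat_adjoint U \<in> carrier_mat n n" using Uc by simp
  have e: "unit_vec n k \<in> carrier_vec n" by simp
  have Ue: "U *\<^sub>v unit_vec n k \<in> carrier_vec n" using Uc e by (rule mult_mat_vec_carrier)
  have "(U * dg n d * mat_adjoint U) *\<^sub>v (U *\<^sub>v unit_vec n k) = U *\<^sub>v (dg n d *\<^sub>v (mat_adjoint U *\<^sub>v (U *\<^sub>v unit_vec n k)))"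
    by (rule mat3_vec[OF Uc dg_carrier Ua Ue])
  also have "mat_adjoint U *\<^sub>v (U *\<^sub>v unit_vec n k) = unit_vec n k" by (rule unitary_vec(2)[OF U e])
  also have "dg n d *\<^sub>v unit_vec n k = complex_of_real (d k) \<cdot>\<^sub>v unit_vec n k" by (rule dg_unit[OF k])
  also have "U *\<^sub>v (complex_of_real (d k) \<cdot>\<^sub>v unit_vec n k) = complex_of_real (d k) \<cdot>\<^sub>v (U *\<^sub>v unit_vec n k)"
    by (rule mult_mat_vec[OF Uc e])
  finally show ?thesis .
qed

lemma sqrt_eigvec:
  assumes T: "psd_mat n T" and u: "u \<in> carrier_vec n" and c: "0 \<le> c"
    and Tu: "T *\<^sub>v (T *\<^sub>v u) = complex_of_real c \<cdot>\<^sub>v u"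
  shows "T *\<^sub>v u = complex_of_real (sqrt c) \<cdot>\<^sub>v u"
proof -
  obtain V e where V: "unitary n V" and Td: "T = V * dg n e * mat_adjoint V" and e: "\<forall>i<n. 0 \<le> e i"
    using psd_spectral[OF T] by blast
  have Vc: "V \<in> carrier_mat n n" using V unfolding unitary_def by auto
  have Va: "mat_adjoint V \<in> carrier_mat n n" using Vc by simp
  define y where "y = mat_adjoint V *\<^sub>v u"
  have y: "y \<in> carrier_vec n" unfolding y_def using Va u by (rule mult_mat_vec_carrier)
  have ey: "dg n e *\<^sub>v y \<in> carrier_vec n" using dg_carrier y by (rule mult_mat_vec_carrier)
  have Tw: "T *\<^sub>v w = V *\<^sub>v (dg n e *\<^sub>v (mat_adjoint V *\<^sub>v w))" if w: "w \<in> carrier_vec n" for w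
    unfolding Td by (rule mat3_vec[OF Vc dg_carrier Va w])
  have Tu1: "T *\<^sub>v u = V *\<^sub>v (dg n e *\<^sub>v y)" unfolding y_def by (rule Tw[OF u])
  have Tu1c: "T *\<^sub>v u \<in> carrier_vec n" unfolding Tu1 using Vc ey by (rule mult_mat_vec_carrier)
  have "T *\<^sub>v (T *\<^sub>v u) = V *\<^sub>v (dg n e *\<^sub>v (dg n e *\<^sub>v y))"
    unfolding Tw[OF Tu1c] unfolding Tu1 unitary_vec(2)[OF V ey] ..
  then have "mat_adjoint V *\<^sub>v (V *\<^sub>v (dg n e *\<^sub>v (dg n e *\<^sub>v y))) = mat_adjoint V *\<^sub>v (complex_of_real c \<cdot>\<^sub>v u)"
    using Tu by simp
  also have "mat_adjoint V *\<^sub>v (complex_of_real c \<cdot>\<^sub>v u) = complex_of_real c \<cdot>\<^sub>v y"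
    unfolding y_def by (rule mult_mat_vec[OF Va u])
  finally have eq: "dg n e *\<^sub>v (dg n e *\<^sub>v y) = complex_of_real c \<cdot>\<^sub>v y"
    using unitary_vec(2)[OF V mult_mat_vec_carrier[OF dg_carrier ey]] by simp
  have comp: "complex_of_real (e i) * y $ i = complex_of_real (sqrt c) * y $ i" if i: "i < n" for i
  proof -
    have "complex_of_real (e i) * (complex_of_real (e i) * y $ i) = complex_of_real c * y $ i"
      using arg_cong[OF eq, of "\<lambda>x. x $ i"] dg_vec[OF ey i] dg_vec[OF y i] i y by simp
    then have "complex_of_real ((e i)^2 - c) * y $ i = 0" by (simp add: algebra_simps power2_eq_square)
    then have "complex_of_real ((e i)^2 - c) = 0 \<or> y $ i = 0" by (simp only: mult_eq_0_iff)
    then have "y $ i = 0 \<or> (e i)^2 = c" by (metis of_real_eq_0_iff right_minus_eq)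
    then show ?thesis
    proof
      assume "(e i)^2 = c"
      then have "e i = sqrt c" using e i by (metis real_sqrt_abs abs_of_nonneg)
      then show ?thesis by simp
    qed simp
  qed
  have "dg n e *\<^sub>v y = complex_of_real (sqrt c) \<cdot>\<^sub>v y"
  proof (rule eq_vecI)
    fix i assume "i < dim_vec (complex_of_real (sqrt c) \<cdot>\<^sub>v y)"
    then have i: "i < n" using y by simp
    show "(dg n e *\<^sub>v y) $ i = (complex_of_real (sqrt c) \<cdot>\<^sub>v y) $ i"
      unfolding dg_vec[OF y i] comp[OF i] using i y by simp
  qed (use y in simp)
  then have "T *\<^sub>v u = V *\<^sub>v (complex_of_real (sqrt c) \<cdot>\<^sub>v y)" using Tu1 by simp
  also have "\<dots> = complex_of_real (sqrt c) \<cdot>\<^sub>v (V *\<^sub>v y)" by (rule mult_mat_vec[OF Vc y])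
  also have "V *\<^sub>v y = u" unfolding y_def by (rule unitary_vec(1)[OF V u])
  finally show ?thesis .
qed

lemma psd_sqrt_unique:
  assumes U: "unitary n U" and d: "\<forall>i<n. 0 \<le> d i" and T: "psd_mat n T"
    and TT: "T * T = U * dg n d * mat_adjoint U"
  shows "T = U * dg n (\<lambda>i. sqrt (d i)) * mat_adjoint U"
proof -
  define S where "S = U * dg n (\<lambda>i. sqrt (d i)) * mat_adjoint U"
  have Uc: "U \<in> carrier_mat n n" using U unfolding unitary_def by auto
  have Ua: "mat_adjoint U \<in> carrier_mat n n" using Uc by simp
  have Tc: "T \<in> carrier_mat n n" using T unfolding psd_mat_def hermitian_mat_def by simp
  have Sc: "S \<in> carrier_mat n n" unfolding S_def by (rule mult3_carrier[OF Uc dg_carrier Ua])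
  have col: "T *\<^sub>v (U *\<^sub>v unit_vec n k) = S *\<^sub>v (U *\<^sub>v unit_vec n k)" if k: "k < n" for k
  proof -
    have u: "U *\<^sub>v unit_vec n k \<in> carrier_vec n" using Uc by simp
    have "T *\<^sub>v (T *\<^sub>v (U *\<^sub>v unit_vec n k)) = (T * T) *\<^sub>v (U *\<^sub>v unit_vec n k)"
      by (rule assoc_mult_mat_vec[OF Tc Tc u, symmetric])
    also have "\<dots> = complex_of_real (d k) \<cdot>\<^sub>v (U *\<^sub>v unit_vec n k)" unfolding TT by (rule udu_vec[OF U k])
    finally have Tu2: "T *\<^sub>v (T *\<^sub>v (U *\<^sub>v unit_vec n k)) = complex_of_real (d k) \<cdot>\<^sub>v (U *\<^sub>v unit_vec n k)" .
    have "T *\<^sub>v (U *\<^sub>v unit_vec n k) = complex_of_real (sqrt (d k)) \<cdot>\<^sub>v (U *\<^sub>v unit_vec n k)"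
      by (rule sqrt_eigvec[OF T u _ Tu2]) (use d k in simp)
    also have "\<dots> = S *\<^sub>v (U *\<^sub>v unit_vec n k)" unfolding S_def by (rule udu_vec[OF U k, symmetric])
    finally show ?thesis .
  qed
  have TU: "T * U = S * U"
  proof (rule eq_matI)
    fix i k assume "i < dim_row (S * U)" "k < dim_col (S * U)"
    then have ik: "i < n" "k < n" using Sc Uc by auto
    have TUc: "T * U \<in> carrier_mat n n" using Tc Uc by (rule mult_carrier_mat)
    have SUc: "S * U \<in> carrier_mat n n" using Sc Uc by (rule mult_carrier_mat)
    have "(T * U) $$ (i,k) = ((T * U) *\<^sub>v unit_vec n k) $ i" using mat_unit_index[OF TUc ik] by simp
    also have "\<dots> = (T *\<^sub>v (U *\<^sub>v unit_vec n k)) $ i" using assoc_mult_mat_vec[OF Tc Uc, of "unit_vec n k"] by simp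
    also have "\<dots> = (S *\<^sub>v (U *\<^sub>v unit_vec n k)) $ i" using col[OF ik(2)] by simp
    also have "\<dots> = ((S * U) *\<^sub>v unit_vec n k) $ i" using assoc_mult_mat_vec[OF Sc Uc, of "unit_vec n k"] by simp
    also have "\<dots> = (S * U) $$ (i,k)" using mat_unit_index[OF SUc ik] by simp
    finally show "(T * U) $$ (i,k) = (S * U) $$ (i,k)" .
  qed (use Tc Sc Uc in auto)
  have "T = T * (U * mat_adjoint U)" using U Tc unfolding unitary_def by simp
  also have "\<dots> = (T * U) * mat_adjoint U" by (rule assoc_mult_mat[symmetric, OF Tc Uc Ua])
  also have "\<dots> = (S * U) * mat_adjoint U" using TU by simp
  also have "\<dots> = S * (U * mat_adjoint U)" by (rule assoc_mult_mat[OF Sc Uc Ua])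
  also have "\<dots> = S" using U Sc unfolding unitary_def by simp
  finally show ?thesis unfolding S_def .
qed

lemma msqrt_prop: assumes A: "psd_mat n A"
  shows "psd_mat n (msqrt A) \<and> msqrt A * msqrt A = A"
    and "\<And>T. psd_mat n T \<Longrightarrow> T * T = A \<Longrightarrow> msqrt A = T"
proof -
  obtain U d where U: "unitary n U" and Ad: "A = U * dg n d * mat_adjoint U" and d: "\<forall>i<n. 0 \<le> d i"
    using psd_spectral[OF A] by blast
  have Uc: "U \<in> carrier_mat n n" using U unfolding unitary_def by auto
  have Ua: "mat_adjoint U \<in> carrier_mat n n" using Uc by simp
  have dimA: "dim_row A = n" using A unfolding psd_mat_def hermitian_mat_def by auto
  define S where "S = U * dg n (\<lambda>i. sqrt (d i)) * mat_adjoint U"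
  have Sp: "psd_mat n S" unfolding S_def by (rule udu_psd[OF U]) (use d in simp)
  have SS: "S * S = A"
  proof -
    let ?D = "dg n (\<lambda>i. sqrt (d i))"
    have UD: "U * ?D \<in> carrier_mat n n" using Uc dg_carrier by (rule mult_carrier_mat)
    have "S * S = (U * ?D) * (mat_adjoint U * (U * ?D * mat_adjoint U))"
      unfolding S_def by (rule assoc_mult_mat[OF UD Ua mult3_carrier[OF Uc dg_carrier Ua]])
    also have "mat_adjoint U * (U * ?D * mat_adjoint U) = mat_adjoint U * (U * ?D) * mat_adjoint U"
      by (rule assoc_mult_mat[symmetric, OF Ua UD Ua])
    also have "mat_adjoint U * (U * ?D) = (mat_adjoint U * U) * ?D"
      by (rule assoc_mult_mat[symmetric, OF Ua Uc dg_carrier])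
    also have "\<dots> = ?D" using U unfolding unitary_def by simp
    also have "(U * ?D) * (?D * mat_adjoint U) = U * ?D * ?D * mat_adjoint U"
      by (rule assoc_mult_mat[symmetric, OF UD dg_carrier Ua])
    also have "U * ?D * ?D = U * (?D * ?D)" by (rule assoc_mult_mat[OF Uc dg_carrier dg_carrier])
    also have "?D * ?D = dg n d" unfolding dg_mult
    proof -
      have "dg n (\<lambda>i. sqrt (d i) * sqrt (d i)) = dg n d"
        unfolding dg_def by (rule eq_matI) (use d in auto)
      then show "dg n (\<lambda>i. sqrt (d i) * sqrt (d i)) = dg n d" .
    qed
    finally show ?thesis unfolding Ad .
  qed
  have uniq: "T = S" if "psd_mat n T" "T * T = A" for T
    unfolding S_def by (rule psd_sqrt_unique[OF U d that(1)]) (use that(2) Ad in simp)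
  have ms: "msqrt A = S" unfolding msqrt_def dimA
  proof (rule the_equality)
    show "psd_mat n S \<and> S * S = A" using Sp SS by (rule conjI)
    fix T assume "psd_mat n T \<and> T * T = A"
    then show "T = S" using uniq by blast
  qed
  show "psd_mat n (msqrt A) \<and> msqrt A * msqrt A = A" using ms Sp SS by simp
  show "\<And>T. psd_mat n T \<Longrightarrow> T * T = A \<Longrightarrow> msqrt A = T" using ms uniq by simp
qed

lemma mconj_mult: assumes A: "A \<in> carrier_mat n m" and B: "B \<in> carrier_mat m k"
  shows "mconj (A * B) = mconj A * mconj B"
proof (rule eq_matI)
  fix i j assume "i < dim_row (mconj A * mconj B)" "j < dim_col (mconj A * mconj B)"
  then have ij: "i < n" "j < k" using A B by auto
  have "(mconj A * mconj B) $$ (i,j) = (\<Sum>l<m. mconj A $$ (i,l) * mconj B $$ (l,j))"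
    by (rule mult_index_sum[OF mconj_carrier[OF A] mconj_carrier[OF B] ij])
  also have "\<dots> = (\<Sum>l<m. cnj (A $$ (i,l) * B $$ (l,j)))" using A B ij by (intro sum.cong) auto
  also have "\<dots> = cnj ((A * B) $$ (i,j))" unfolding mult_index_sum[OF A B ij] by simp
  also have "\<dots> = mconj (A * B) $$ (i,j)" using A B ij by simp
  finally show "mconj (A * B) $$ (i,j) = (mconj A * mconj B) $$ (i,j)" by simp
qed (use A B in auto)

lemma mconj_minus: assumes "A \<in> carrier_mat n m" "B \<in> carrier_mat n m"
  shows "mconj (A - B) = mconj A - mconj B"
  by (rule eq_matI) (use assms in auto)

lemma adj_mconj: assumes A: "A \<in> carrier_mat n m" shows "mat_adjoint (mconj A) = mconj (mat_adjoint A)"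
  by (rule eq_matI) (use A in auto)

lemma herm_mconj: assumes H: "hermitian_mat n H" shows "hermitian_mat n (mconj H)"
  using H unfolding hermitian_mat_def using adj_mconj[of H n n] by auto

lemma cv_inner: assumes p: "p \<in> carrier_vec n" and v: "v \<in> carrier_vec n"
  shows "cv p \<bullet>c v = cnj (p \<bullet>c cv v)"
  using p v by (simp add: cscalar_sum[of _ n])

lemma psd_mconj: assumes A: "psd_mat n A" shows "psd_mat n (mconj A)"
  unfolding psd_mat_def
proof (intro conjI ballI)
  have H: "hermitian_mat n A" using A unfolding psd_mat_def by simp
  have Ac: "A \<in> carrier_mat n n" using H unfolding hermitian_mat_def by simp
  show "hermitian_mat n (mconj A)" by (rule herm_mconj[OF H])
  fix v :: "complex vec" assume v: "v \<in> carrier_vec n"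
  have Av: "A *\<^sub>v cv v \<in> carrier_vec n" using Ac cv_carrier[OF v] by (rule mult_mat_vec_carrier)
  have "(mconj A *\<^sub>v v) \<bullet>c v = cnj ((A *\<^sub>v cv v) \<bullet>c cv v)"
    unfolding mconj_vec[OF Ac v] by (rule cv_inner[OF Av v])
  moreover have "0 \<le> Re ((A *\<^sub>v cv v) \<bullet>c cv v)" using A cv_carrier[OF v] unfolding psd_mat_def by blast
  ultimately show "0 \<le> Re ((mconj A *\<^sub>v v) \<bullet>c v)" by simp
qed

lemma psd_herm: "psd_mat n A \<Longrightarrow> hermitian_mat n A" unfolding psd_mat_def by simp
lemma herm_carrier: "hermitian_mat n A \<Longrightarrow> A \<in> carrier_mat n n" unfolding hermitian_mat_def by simp
lemma herm_adj: "hermitian_mat n A \<Longrightarrow> mat_adjoint A = A" unfolding hermitian_mat_def by simp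

lemma msqrt_mconj: assumes A: "psd_mat n A" shows "msqrt (mconj A) = mconj (msqrt A)"
proof -
  have S: "psd_mat n (msqrt A)" and SS: "msqrt A * msqrt A = A" using msqrt_prop(1)[OF A] by auto
  have Sc: "msqrt A \<in> carrier_mat n n" using herm_carrier[OF psd_herm[OF S]] .
  have "mconj (msqrt A) * mconj (msqrt A) = mconj A" using mconj_mult[OF Sc Sc] SS by simp
  then show ?thesis by (rule msqrt_prop(2)[OF psd_mconj[OF A] psd_mconj[OF S]])
qed

lemma herm_sandwich: assumes S: "hermitian_mat n S" and X: "hermitian_mat n X"
  shows "hermitian_mat n (S * X * S)"
proof -
  have Sc: "S \<in> carrier_mat n n" by (rule herm_carrier[OF S])
  have Xc: "X \<in> carrier_mat n n" by (rule herm_carrier[OF X])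
  have "mat_adjoint (mat_adjoint S * X * S) = mat_adjoint S * X * S"
    by (rule herm_conj_mat[OF Xc herm_adj[OF X] Sc])
  then show ?thesis unfolding hermitian_mat_def herm_adj[OF S] using mult3_carrier[OF Sc Xc Sc] by simp
qed

lemma cp_sandwich: assumes S: "(S::complex mat) \<in> carrier_mat n n" and X: "X \<in> carrier_mat n n"
  shows "char_poly (S * X * S) = char_poly (X * (S * S))"
proof -
  have XS: "X * S \<in> carrier_mat n n" using X S by (rule mult_carrier_mat)
  have "S * X * S = S * (X * S)" by (rule assoc_mult_mat[OF S X S])
  then have "char_poly (S * X * S) = char_poly ((X * S) * S)" using char_poly_comm[OF S XS] by simp
  also have "(X * S) * S = X * (S * S)" by (rule assoc_mult_mat[OF X S S])
  finally show ?thesis .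
qed

lemma sandwich_minus: assumes S: "(S::complex mat) \<in> carrier_mat n n" and X: "X \<in> carrier_mat n n"
  and Y: "Y \<in> carrier_mat n n"
  shows "S * X * S - S * Y * S = S * (X - Y) * S"
proof -
  have "S * (X - Y) = S * X - S * Y" by (rule mult_minus_distrib_mat[OF S X Y])
  then have "S * (X - Y) * S = (S * X - S * Y) * S" by simp
  also have "\<dots> = S * X * S - S * Y * S"
    by (rule minus_mult_distrib_mat) (use S X Y in auto)
  finally show ?thesis by simp
qed

lemma eigs_cp: "char_poly A = char_poly B \<Longrightarrow> eigs_desc A = eigs_desc B"
  unfolding eigs_desc_def by simp

lemma weyl_cp:
  assumes A: "hermitian_mat n A" and B: "hermitian_mat n B" and j: "j < n"
    and cp: "char_poly (A - B) = char_poly Z"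
    and bd: "\<And>\<mu>. poly (char_poly Z) \<mu> = 0 \<Longrightarrow> cmod \<mu> \<le> c"
  shows "\<bar>eigs_desc A ! j - eigs_desc B ! j\<bar> \<le> c"
  by (rule weyl[OF A B j]) (use cp bd in simp)

lemma add_minus_cancel_mat: assumes "(A::complex mat) \<in> carrier_mat n n" "B \<in> carrier_mat n n"
  shows "A + (B - A) = B"
  by (rule eq_matI) (use assms in auto)

theorem lemma13:
  fixes M M' M0 M0' :: "complex mat" and n j :: nat
  assumes "psd_mat n M" and "psd_mat n M'" and "psd_mat n M0" and "psd_mat n M0'"
    and "j < n"
  shows "\<bar>eigs_desc (msqrt (mconj M') * M * msqrt (mconj M')) ! j
          - eigs_desc (msqrt (mconj M0') * M0 * msqrt (mconj M0')) ! j\<bar>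
     \<le> min (opnorm (mconj M0' * (M - M0))
             + opnorm (msqrt (mconj M0) * (M' - M0') * msqrt (mconj M0)))
            (opnorm (mconj M0 * (M' - M0'))
             + opnorm (msqrt (mconj M0') * (M - M0) * msqrt (mconj M0')))
       + opnorm (mconj (M' - M0') * (M - M0))"
proof -
  note pM = assms(1) and pM' = assms(2) and pM0 = assms(3) and pM0' = assms(4) and jn = assms(5)
  define N' where "N' = mconj M'"
  define N0' where "N0' = mconj M0'"
  define N0 where "N0 = mconj M0"
  define R' where "R' = msqrt N'"
  define R0' where "R0' = msqrt N0'"
  define R0 where "R0 = msqrt N0"
  define sM where "sM = msqrt M"
  define sM0 where "sM0 = msqrt M0"
  define d where "d = M - M0"
  define d' where "d' = M' - M0'"
  define P where "P = R' * M * R'"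
  define P0 where "P0 = R0' * M0 * R0'"
  define a1 where "a1 = opnorm (N0' * d)"
  define a2 where "a2 = opnorm (R0 * d' * R0)"
  define b1 where "b1 = opnorm (N0 * d')"
  define b2 where "b2 = opnorm (R0' * d * R0')"
  define c where "c = opnorm (mconj d' * d)"
  have pN': "psd_mat n N'" unfolding N'_def by (rule psd_mconj[OF pM'])
  have pN0': "psd_mat n N0'" unfolding N0'_def by (rule psd_mconj[OF pM0'])
  have pN0: "psd_mat n N0" unfolding N0_def by (rule psd_mconj[OF pM0])
  have R'p: "psd_mat n R'" and R'R': "R' * R' = N'" unfolding R'_def using msqrt_prop(1)[OF pN'] by auto
  have R0'p: "psd_mat n R0'" and R0'R0': "R0' * R0' = N0'" unfolding R0'_def using msqrt_prop(1)[OF pN0'] by auto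
  have R0p: "psd_mat n R0" unfolding R0_def using msqrt_prop(1)[OF pN0] by auto
  have sMp: "psd_mat n sM" and sMsM: "sM * sM = M" unfolding sM_def using msqrt_prop(1)[OF pM] by auto
  have sM0p: "psd_mat n sM0" and sM0sM0: "sM0 * sM0 = M0" unfolding sM0_def using msqrt_prop(1)[OF pM0] by auto
  have R0sM0: "mconj R0 = sM0" unfolding R0_def N0_def sM0_def msqrt_mconj[OF pM0] by simp
  have hM: "hermitian_mat n M" by (rule psd_herm[OF pM])
  have hM0: "hermitian_mat n M0" by (rule psd_herm[OF pM0])
  have hM': "hermitian_mat n M'" by (rule psd_herm[OF pM'])
  have hM0': "hermitian_mat n M0'" by (rule psd_herm[OF pM0'])
  have hN': "hermitian_mat n N'" by (rule psd_herm[OF pN'])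
  have hN0': "hermitian_mat n N0'" by (rule psd_herm[OF pN0'])
  have hN0: "hermitian_mat n N0" by (rule psd_herm[OF pN0])
  have hR': "hermitian_mat n R'" by (rule psd_herm[OF R'p])
  have hR0': "hermitian_mat n R0'" by (rule psd_herm[OF R0'p])
  have hR0: "hermitian_mat n R0" by (rule psd_herm[OF R0p])
  have hsM: "hermitian_mat n sM" by (rule psd_herm[OF sMp])
  have hsM0: "hermitian_mat n sM0" by (rule psd_herm[OF sM0p])
  have hd: "hermitian_mat n d" unfolding d_def by (rule herm_minus[OF hM hM0])
  have hd': "hermitian_mat n d'" unfolding d'_def by (rule herm_minus[OF hM' hM0'])
  note cM = herm_carrier[OF hM] and cM0 = herm_carrier[OF hM0] and cM' = herm_carrier[OF hM']
    and cM0' = herm_carrier[OF hM0'] and cN' = herm_carrier[OF hN'] and cN0' = herm_carrier[OF hN0']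
    and cN0 = herm_carrier[OF hN0] and cR' = herm_carrier[OF hR'] and cR0' = herm_carrier[OF hR0']
    and cR0 = herm_carrier[OF hR0] and csM = herm_carrier[OF hsM] and csM0 = herm_carrier[OF hsM0]
    and cd = herm_carrier[OF hd] and cd' = herm_carrier[OF hd']
  have cmd': "mconj d' \<in> carrier_mat n n" using cd' by simp
  have md': "mconj d' = N' - N0'" unfolding d'_def N'_def N0'_def by (rule mconj_minus[OF cM' cM0'])
  have N'eq: "N' = N0' + mconj d'" unfolding md' using add_minus_cancel_mat[OF cN0' cN'] by simp
  have Meq: "M = M0 + d" unfolding d_def using add_minus_cancel_mat[OF cM0 cM] by simp
  have cmult: "X * Y \<in> carrier_mat n n" if "X \<in> carrier_mat n n" "Y \<in> carrier_mat n n" for X Y :: "complex mat"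
    using that by (rule mult_carrier_mat)
  have cp_comm: "char_poly (X * Y) = char_poly (Y * X)" if "X \<in> carrier_mat n n" "Y \<in> carrier_mat n n" for X Y :: "complex mat"
    using char_poly_comm[OF that] .
  define Q where "Q = R' * M0 * R'"
  define Q' where "Q' = sM0 * N' * sM0"
  define P0' where "P0' = sM0 * N0' * sM0"
  have hP: "hermitian_mat n P" unfolding P_def by (rule herm_sandwich[OF hR' hM])
  have hQ: "hermitian_mat n Q" unfolding Q_def by (rule herm_sandwich[OF hR' hM0])
  have hP0: "hermitian_mat n P0" unfolding P0_def by (rule herm_sandwich[OF hR0' hM0])
  have hQ': "hermitian_mat n Q'" unfolding Q'_def by (rule herm_sandwich[OF hsM0 hN'])
  have hP0': "hermitian_mat n P0'" unfolding P0'_def by (rule herm_sandwich[OF hsM0 hN0'])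
  have A1: "\<bar>eigs_desc P ! j - eigs_desc Q ! j\<bar> \<le> a1 + c"
  proof (rule weyl_cp[OF hP hQ jn])
    have "P - Q = R' * d * R'" unfolding P_def Q_def d_def by (rule sandwich_minus[OF cR' cM cM0])
    then have "char_poly (P - Q) = char_poly (R' * d * R')" by simp
    also have "\<dots> = char_poly (d * N')" unfolding cp_sandwich[OF cR' cd] R'R' ..
    also have "\<dots> = char_poly (N' * d)" by (rule cp_comm[OF cd cN'])
    finally show "char_poly (P - Q) = char_poly (N0' * d + mconj d' * d)"
      unfolding N'eq by (simp add: add_mult_distrib_mat[OF cN0' cmd' cd])
    fix \<mu> assume "poly (char_poly (N0' * d + mconj d' * d)) \<mu> = 0"
    then show "cmod \<mu> \<le> a1 + c" unfolding a1_def c_def by (rule eig_sum_bound[OF cmult[OF cN0' cd] cmult[OF cmd' cd]])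
  qed
  have QQ': "eigs_desc Q = eigs_desc Q'"
  proof (rule eigs_cp)
    have "char_poly Q = char_poly (M0 * N')" unfolding Q_def cp_sandwich[OF cR' cM0] R'R' ..
    also have "\<dots> = char_poly (N' * M0)" by (rule cp_comm[OF cM0 cN'])
    also have "\<dots> = char_poly Q'" unfolding Q'_def cp_sandwich[OF csM0 cN'] sM0sM0 ..
    finally show "char_poly Q = char_poly Q'" .
  qed
  have P0P0': "eigs_desc P0 = eigs_desc P0'"
  proof (rule eigs_cp)
    have "char_poly P0 = char_poly (M0 * N0')" unfolding P0_def cp_sandwich[OF cR0' cM0] R0'R0' ..
    also have "\<dots> = char_poly (N0' * M0)" by (rule cp_comm[OF cM0 cN0'])
    also have "\<dots> = char_poly P0'" unfolding P0'_def cp_sandwich[OF csM0 cN0'] sM0sM0 ..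
    finally show "char_poly P0 = char_poly P0'" .
  qed
  have A2: "\<bar>eigs_desc Q' ! j - eigs_desc P0' ! j\<bar> \<le> a2"
  proof (rule weyl_cp[OF hQ' hP0' jn])
    have "Q' - P0' = sM0 * mconj d' * sM0" unfolding Q'_def P0'_def md' by (rule sandwich_minus[OF csM0 cN' cN0'])
    also have "\<dots> = mconj (R0 * d' * R0)"
      unfolding mconj_mult[OF cmult[OF cR0 cd'] cR0] mconj_mult[OF cR0 cd'] R0sM0 ..
    finally have "char_poly (Q' - P0') = char_poly (mconj (R0 * d' * R0))" by simp
    also have "\<dots> = char_poly (R0 * d' * R0)" by (rule char_poly_mconj_herm[OF herm_sandwich[OF hR0 hd']])
    finally show "char_poly (Q' - P0') = char_poly (R0 * d' * R0)" .
    fix \<mu> assume "poly (char_poly (R0 * d' * R0)) \<mu> = 0"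
    then show "cmod \<mu> \<le> a2" unfolding a2_def by (rule eig_bound[OF mult3_carrier[OF cR0 cd' cR0]])
  qed
  have boundA: "\<bar>eigs_desc P ! j - eigs_desc P0 ! j\<bar> \<le> a1 + a2 + c"
    using A1 A2 unfolding QQ' P0P0' by linarith
  define R where "R = sM * N' * sM"
  define R1 where "R1 = sM * N0' * sM"
  define P1 where "P1 = R0' * M * R0'"
  have hR: "hermitian_mat n R" unfolding R_def by (rule herm_sandwich[OF hsM hN'])
  have hR1: "hermitian_mat n R1" unfolding R1_def by (rule herm_sandwich[OF hsM hN0'])
  have hP1: "hermitian_mat n P1" unfolding P1_def by (rule herm_sandwich[OF hR0' hM])
  have PR: "eigs_desc P = eigs_desc R"
  proof (rule eigs_cp)
    have "char_poly P = char_poly (M * N')" unfolding P_def cp_sandwich[OF cR' cM] R'R' ..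
    also have "\<dots> = char_poly (N' * M)" by (rule cp_comm[OF cM cN'])
    also have "\<dots> = char_poly R" unfolding R_def cp_sandwich[OF csM cN'] sMsM ..
    finally show "char_poly P = char_poly R" .
  qed
  have R1P1: "eigs_desc R1 = eigs_desc P1"
  proof (rule eigs_cp)
    have "char_poly R1 = char_poly (N0' * M)" unfolding R1_def cp_sandwich[OF csM cN0'] sMsM ..
    also have "\<dots> = char_poly (M * N0')" by (rule cp_comm[OF cN0' cM])
    also have "\<dots> = char_poly P1" unfolding P1_def cp_sandwich[OF cR0' cM] R0'R0' ..
    finally show "char_poly R1 = char_poly P1" .
  qed
  have b1': "opnorm (mconj d' * M0) \<le> b1"
  proof -
    have "mconj d' * M0 = mconj (d' * N0)" using mconj_mult[OF cd' cN0] unfolding N0_def by simp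
    then have "opnorm (mconj d' * M0) = opnorm (d' * N0)" using opnorm_mconj[OF cmult[OF cd' cN0]] by simp
    also have "d' * N0 = mat_adjoint (N0 * d')"
      unfolding adj_mult[OF cN0 cd'] herm_adj[OF hN0] herm_adj[OF hd'] ..
    also have "opnorm (mat_adjoint (N0 * d')) \<le> opnorm (N0 * d')" by (rule opnorm_adj_le[OF cmult[OF cN0 cd']])
    finally show ?thesis unfolding b1_def .
  qed
  have B1: "\<bar>eigs_desc R ! j - eigs_desc R1 ! j\<bar> \<le> b1 + c"
  proof (rule weyl_cp[OF hR hR1 jn])
    have "R - R1 = sM * mconj d' * sM" unfolding R_def R1_def md' by (rule sandwich_minus[OF csM cN' cN0'])
    then have "char_poly (R - R1) = char_poly (sM * mconj d' * sM)" by simp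
    also have "\<dots> = char_poly (mconj d' * M)" unfolding cp_sandwich[OF csM cmd'] sMsM ..
    also have "mconj d' * M = mconj d' * M0 + mconj d' * d"
      unfolding Meq by (rule mult_add_distrib_mat[OF cmd' cM0 cd])
    finally show "char_poly (R - R1) = char_poly (mconj d' * M0 + mconj d' * d)" .
    fix \<mu> assume "poly (char_poly (mconj d' * M0 + mconj d' * d)) \<mu> = 0"
    then have "cmod \<mu> \<le> opnorm (mconj d' * M0) + opnorm (mconj d' * d)"
      by (rule eig_sum_bound[OF cmult[OF cmd' cM0] cmult[OF cmd' cd]])
    then show "cmod \<mu> \<le> b1 + c" using b1' unfolding c_def by linarith
  qed
  have B2: "\<bar>eigs_desc P1 ! j - eigs_desc P0 ! j\<bar> \<le> b2"
  proof (rule weyl_cp[OF hP1 hP0 jn])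
    show "char_poly (P1 - P0) = char_poly (R0' * d * R0')"
      unfolding P1_def P0_def d_def sandwich_minus[OF cR0' cM cM0] ..
    fix \<mu> assume "poly (char_poly (R0' * d * R0')) \<mu> = 0"
    then show "cmod \<mu> \<le> b2" unfolding b2_def by (rule eig_bound[OF mult3_carrier[OF cR0' cd cR0']])
  qed
  have boundB: "\<bar>eigs_desc P ! j - eigs_desc P0 ! j\<bar> \<le> b1 + b2 + c"
    using B1 B2 unfolding PR R1P1 by linarith
  have final: "\<bar>eigs_desc P ! j - eigs_desc P0 ! j\<bar> \<le> min (a1 + a2) (b1 + b2) + c"
    using boundA boundB by linarith
  show ?thesis using final
    unfolding P_def P0_def R'_def R0'_def N'_def N0'_def a1_def a2_def b1_def b2_def c_def d_def d'_def R0_def N0_def .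
qed


end
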